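(* Let $u_0\in H^4(\mathbb{R})$ be non-trivial and let $u$ be the solution of the Degasperis–Procesi equation with $u(x,0)=u_0(x)$, defined on $U=\mathbb{R}\times(0,T)$ where $T>0$ is its maximal existence time. Then $u$ is a generic solution of the Degasperis–Procesi equation, viewed as a $\mathcal{B}$-PSS equation of class $C^1$ with the one-forms below and $\mathcal{B}=C^0([0,T);H^4(\mathbb{R}))\cap C^1([0,T);H^3(\mathbb{R}))$.
   Context: The Degasperis–Procesi equation: $u_t+uu_x+\tfrac32\partial_x(1-\partial_x^2)^{-1}(u^2)=0$, with $(1-\partial_x^2)^{-1}f=G\ast f$, $G(x)=\tfrac12e^{-|x|}$ (equivalent, in $\mathcal{B}$, to $u_t-u_{txx}+4uu_x=3u_xu_{xx}+uu_{xxx}$). For $u_0\in H^4(\mathbb{R})$ there is a unique solution in $\mathcal{B}$ on a maximal interval $[0,T)$. With $m=u-u_{xx}$, $F=u_x^2-2uu_x+uu_{xx}$, real $\mu$ and a fixed sign choice: $\omega_1=m\,dx+F\,dt$, $\omega_2=(\mu m\pm2\sqrt{1+\mu^2})dx+\mu F\,dt$, $\omega_3=(\pm\sqrt{1+\mu^2}\,m+2\mu)dx\pm\sqrt{1+\mu^2}\,F\,dt$. Definition (generic solution): a function $u:U\to\mathbb{R}$ is a generic solution of a $\mathcal{B}$-PSS equation of class $C^k$ (with associated forms $\omega_i=f_{i1}dx+f_{i2}dt$ satisfying $d\omega_1=\omega_3\wedge\omega_2$, $d\omega_2=\omega_1\wedge\omega_3$, $d\omega_3=\omega_1\wedge\omega_2$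 on solutions) if (a) $u\in\mathcal{B}$; (b) $u$ is a solution of the equation; (c) the one-forms $\omega_i$ are $C^k$ on $U$; (d) there exists at least one simply connected open set $\Omega\subseteq U$ with $\omega_1\wedge\omega_2|_p\neq0$ for each $p\in\Omega$. *)

theory Defs
  imports "HOL-Analysis.Analysis"
begin

definition test_fun :: "(real \<Rightarrow> real) \<Rightarrow> bool" where
  "test_fun \<phi> \<longleftrightarrow> (\<forall>n x. ((deriv ^^ n) \<phi>) differentiable (at x)) \<and>
                    (\<exists>R. \<forall>x. R < \<bar>x\<bar> \<longrightarrow> \<phi> x = 0)"

definition sq_int :: "(real \<Rightarrow> real) \<Rightarrow> bool" where
  "sq_int f \<longleftrightarrow> f \<in> borel_measurable lborel \<and> integrable lborel (\<lambda>x. (f x)^2)"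

definition weak_deriv :: "nat \<Rightarrow> (real \<Rightarrow> real) \<Rightarrow> (real \<Rightarrow> real) \<Rightarrow> bool" where
  "weak_deriv n f g \<longleftrightarrow> (\<forall>\<phi>. test_fun \<phi> \<longrightarrow>
      integrable lborel (\<lambda>x. f x * (deriv ^^ n) \<phi> x) \<and>
      integrable lborel (\<lambda>x. g x * \<phi> x) \<and>
      (LINT x|lborel. f x * (deriv ^^ n) \<phi> x) = (-1)^n * (LINT x|lborel. g x * \<phi> x))"

definition Hk :: "nat \<Rightarrow> (real \<Rightarrow> real) \<Rightarrow> bool" where
  "Hk k f \<longleftrightarrow> sq_int f \<and> (\<forall>j\<le>k. \<exists>g. sq_int g \<and> weak_deriv j f g)"

definition Hk_norm :: "nat \<Rightarrow> (real \<Rightarrow> real) \<Rightarrow> real" where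
  "Hk_norm k f = sqrt (\<Sum>j\<le>k. LINT x|lborel. ((SOME g. sq_int g \<and> weak_deriv j f g) x)^2)"

definition Iv :: "ereal \<Rightarrow> real set" where
  "Iv T = {t. 0 \<le> t \<and> ereal t < T}"

text \<open>v : I \<rightarrow> H^k continuous (v t x = value of v(t) at x).\<close>
definition cont_Hk :: "nat \<Rightarrow> real set \<Rightarrow> (real \<Rightarrow> real \<Rightarrow> real) \<Rightarrow> bool" where
  "cont_Hk k I v \<longleftrightarrow> (\<forall>t\<in>I. Hk k (v t)) \<and>
     (\<forall>t\<in>I. ((\<lambda>s. Hk_norm k (\<lambda>x. v s x - v t x)) \<longlongrightarrow> 0) (at t within I))"

definition time_deriv_Hk :: "nat \<Rightarrow> real set \<Rightarrow> (real \<Rightarrow> real \<Rightarrow> real) \<Rightarrow> (real \<Rightarrow> real \<Rightarrow> real) \<Rightarrow> bool" where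
  "time_deriv_Hk k I v w \<longleftrightarrow> (\<forall>t\<in>I. Hk k (w t) \<and>
     ((\<lambda>s. Hk_norm k (\<lambda>x. (v s x - v t x) / (s - t) - w t x)) \<longlongrightarrow> 0) (at t within I))"

definition C1_Hk :: "nat \<Rightarrow> real set \<Rightarrow> (real \<Rightarrow> real \<Rightarrow> real) \<Rightarrow> bool" where
  "C1_Hk k I v \<longleftrightarrow> cont_Hk k I v \<and> (\<exists>w. time_deriv_Hk k I v w \<and> cont_Hk k I w)"

text \<open>Membership in B on [0,T). Each u(t) is represented by its continuous
  representative (exists by Sobolev embedding H^4 \<subseteq> C^3).\<close>
definition Bsp :: "ereal \<Rightarrow> (real \<Rightarrow> real \<Rightarrow> real) \<Rightarrow> bool" where
  "Bsp T u \<longleftrightarrow> cont_Hk 4 (Iv T) u \<and> C1_Hk 3 (Iv T) u \<and>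
     (\<forall>t\<in>Iv T. continuous_on UNIV (u t))"

definition Gk :: "real \<Rightarrow> real" where
  "Gk x = exp (- \<bar>x\<bar>) / 2"

definition DP_sol :: "ereal \<Rightarrow> (real \<Rightarrow> real \<Rightarrow> real) \<Rightarrow> bool" where
  "DP_sol T u \<longleftrightarrow> (\<exists>w. time_deriv_Hk 3 (Iv T) u w \<and>
     (\<forall>t\<in>Iv T. AE x in lborel.
        w t x + u t x * deriv (u t) x
        + 3/2 * deriv (\<lambda>z. LINT y|lborel. Gk (z - y) * (u t y)^2) x = 0))"

text \<open>Points of U are pairs (x,t).\<close>
definition Udom :: "ereal \<Rightarrow> (real \<times> real) set" where
  "Udom T = {(x,t). 0 < t \<and> ereal t < T}"

definition mDP :: "(real \<Rightarrow> real \<Rightarrow> real) \<Rightarrow> real \<times> real \<Rightarrow> real" where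
  "mDP u p = (case p of (x,t) \<Rightarrow> u t x - deriv (deriv (u t)) x)"

definition FDP :: "(real \<Rightarrow> real \<Rightarrow> real) \<Rightarrow> real \<times> real \<Rightarrow> real" where
  "FDP u p = (case p of (x,t) \<Rightarrow>
      (deriv (u t) x)^2 - 2 * u t x * deriv (u t) x + u t x * deriv (deriv (u t)) x)"

text \<open>Coefficients f_{i1} (dx) and f_{i2} (dt) of omega_i; s is the sign choice (\<plusminus>1).\<close>
definition f11 :: "(real \<Rightarrow> real \<Rightarrow> real) \<Rightarrow> real \<times> real \<Rightarrow> real" where
  "f11 u p = mDP u p"
definition f12 :: "(real \<Rightarrow> real \<Rightarrow> real) \<Rightarrow> real \<times> real \<Rightarrow> real" where
  "f12 u p = FDP u p"
definition f21 :: "real \<Rightarrow> real \<Rightarrow> (real \<Rightarrow> real \<Rightarrow> real) \<Rightarrow> real \<times> real \<Rightarrow> real" where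
  "f21 \<mu> s u p = \<mu> * mDP u p + s * 2 * sqrt (1 + \<mu>^2)"
definition f22 :: "real \<Rightarrow> real \<Rightarrow> (real \<Rightarrow> real \<Rightarrow> real) \<Rightarrow> real \<times> real \<Rightarrow> real" where
  "f22 \<mu> s u p = \<mu> * FDP u p"
definition f31 :: "real \<Rightarrow> real \<Rightarrow> (real \<Rightarrow> real \<Rightarrow> real) \<Rightarrow> real \<times> real \<Rightarrow> real" where
  "f31 \<mu> s u p = s * sqrt (1 + \<mu>^2) * mDP u p + 2 * \<mu>"
definition f32 :: "real \<Rightarrow> real \<Rightarrow> (real \<Rightarrow> real \<Rightarrow> real) \<Rightarrow> real \<times> real \<Rightarrow> real" where
  "f32 \<mu> s u p = s * sqrt (1 + \<mu>^2) * FDP u p"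

definition C1_on :: "(real \<times> real) set \<Rightarrow> (real \<times> real \<Rightarrow> real) \<Rightarrow> bool" where
  "C1_on U f \<longleftrightarrow> (\<exists>fx ft. continuous_on U fx \<and> continuous_on U ft \<and>
     (\<forall>p\<in>U. (f has_derivative (\<lambda>(h,k). fx p * h + ft p * k)) (at p)))"

definition generic_DP_sol :: "ereal \<Rightarrow> real \<Rightarrow> real \<Rightarrow> (real \<Rightarrow> real \<Rightarrow> real) \<Rightarrow> bool" where
  "generic_DP_sol T \<mu> s u \<longleftrightarrow>
     Bsp T u \<and> DP_sol T u \<and>
     C1_on (Udom T) (f11 u) \<and> C1_on (Udom T) (f12 u) \<and>
     C1_on (Udom T) (f21 \<mu> s u) \<and> C1_on (Udom T) (f22 \<mu> s u) \<and>
     C1_on (Udom T) (f31 \<mu> s u) \<and> C1_on (Udom T) (f32 \<mu> s u) \<and>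
     (\<exists>\<Omega>. open \<Omega> \<and> \<Omega> \<noteq> {} \<and> simply_connected \<Omega> \<and> \<Omega> \<subseteq> Udom T \<and>
        (\<forall>p\<in>\<Omega>. f11 u p * f22 \<mu> s u p - f12 u p * f21 \<mu> s u p \<noteq> 0))"

end

theory Submission
  imports Defs "HOL-Computational_Algebra.Polynomial" "HOL-Probability.Distribution_Functions"
begin

fun sm :: "nat \<Rightarrow> (real \<Rightarrow> real) \<Rightarrow> bool" where
  "sm 0 f = (\<forall>x. f differentiable (at x))"
| "sm (Suc n) f = ((\<forall>x. f differentiable (at x)) \<and> sm n (deriv f))"

definition smooth :: "(real \<Rightarrow> real) \<Rightarrow> bool" where
  "smooth f \<longleftrightarrow> (\<forall>n x. (deriv ^^ n) f differentiable (at x))"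

lemma sm_iff: "sm n f \<longleftrightarrow> (\<forall>k\<le>n. \<forall>x. (deriv ^^ k) f differentiable (at x))"
proof (induction n arbitrary: f)
  case 0 then show ?case by simp
next
  case (Suc n)
  have "(\<forall>k\<le>Suc n. \<forall>x. (deriv ^^ k) f differentiable (at x)) \<longleftrightarrow>
        (\<forall>x. f differentiable (at x)) \<and> (\<forall>k\<le>n. \<forall>x. (deriv ^^ Suc k) f differentiable (at x))"
    by (metis (no_types, lifting) Suc_le_mono funpow_0 le0 not0_implies_Suc)
  also have "\<dots> \<longleftrightarrow> (\<forall>x. f differentiable (at x)) \<and> sm n (deriv f)"
    using Suc by (simp add: funpow_Suc_right del: funpow.simps)
  finally show ?case by simp
qed

lemma smooth_sm: "smooth f \<longleftrightarrow> (\<forall>n. sm n f)"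
  unfolding smooth_def sm_iff by blast

lemma sm_SucD: "sm (Suc n) f \<Longrightarrow> sm n f"
  by (auto simp: sm_iff)

lemma sm_diff0: "sm n f \<Longrightarrow> f differentiable (at x)"
  by (cases n) auto

lemma deriv_add_fun:
  fixes f g :: "real \<Rightarrow> real"
  assumes "\<And>x. f differentiable (at x)" "\<And>x. g differentiable (at x)"
  shows "deriv (\<lambda>x. f x + g x) = (\<lambda>x. deriv f x + deriv g x)"
proof
  fix x
  have "((\<lambda>x. f x + g x) has_real_derivative deriv f x + deriv g x) (at x)"
    using assms by (intro derivative_intros) (auto simp: DERIV_deriv_iff_real_differentiable)
  then show "deriv (\<lambda>x. f x + g x) x = deriv f x + deriv g x" by (rule DERIV_imp_deriv)
qed

lemma deriv_mult_fun:
  fixes f g :: "real \<Rightarrow> real"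
  assumes "\<And>x. f differentiable (at x)" "\<And>x. g differentiable (at x)"
  shows "deriv (\<lambda>x. f x * g x) = (\<lambda>x. deriv f x * g x + f x * deriv g x)"
proof
  fix x
  have "(f has_real_derivative deriv f x) (at x)" "(g has_real_derivative deriv g x) (at x)"
    using assms by (auto simp: DERIV_deriv_iff_real_differentiable)
  from DERIV_mult[OF this]
  have "((\<lambda>x. f x * g x) has_real_derivative deriv f x * g x + f x * deriv g x) (at x)"
    by (simp add: mult.commute)
  then show "deriv (\<lambda>x. f x * g x) x = deriv f x * g x + f x * deriv g x" by (rule DERIV_imp_deriv)
qed

lemma sm_add: "sm n f \<Longrightarrow> sm n g \<Longrightarrow> sm n (\<lambda>x. f x + g x)"
proof (induction n arbitrary: f g)
  case 0 then show ?case by auto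
next
  case (Suc n)
  then have d: "\<And>x. f differentiable (at x)" "\<And>x. g differentiable (at x)" by auto
  show ?case using Suc d by (auto simp: deriv_add_fun[OF d])
qed

lemma sm_const: "sm n (\<lambda>x. c)"
proof (induction n arbitrary: c)
  case 0 then show ?case by simp
next
  case (Suc n)
  have "deriv (\<lambda>x. c) = (\<lambda>x. 0)" by (rule ext) simp
  then show ?case using Suc by simp
qed

lemma sm_mult: "sm n f \<Longrightarrow> sm n g \<Longrightarrow> sm n (\<lambda>x. f x * g x)"
proof (induction n arbitrary: f g)
  case 0 then show ?case by auto
next
  case (Suc n)
  then have d: "\<And>x. f differentiable (at x)" "\<And>x. g differentiable (at x)" by auto
  have "sm n (\<lambda>x. deriv f x * g x)" using Suc.IH Suc.prems sm_SucD by auto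
  moreover have "sm n (\<lambda>x. f x * deriv g x)" using Suc.IH Suc.prems sm_SucD by auto
  ultimately show ?case using d by (auto simp: deriv_mult_fun[OF d] intro!: sm_add)
qed

lemma sm_id: "sm n (\<lambda>x. x)"
proof (cases n)
  case 0 then show ?thesis by simp
next
  case (Suc m)
  have "deriv (\<lambda>x. x) = (\<lambda>x. 1::real)" by (rule ext) simp
  then show ?thesis using Suc by (simp add: sm_const)
qed

lemma DERIV_affine_comp:
  fixes f :: "real \<Rightarrow> real"
  assumes "(f has_real_derivative D) (at (a*x+b))"
  shows "((\<lambda>x. f (a*x+b)) has_real_derivative D * a) (at x)"
proof -
  have g: "((\<lambda>x. a*x+b) has_real_derivative a) (at x)" by (auto intro!: derivative_eq_intros)
  from DERIV_chain2[where f=f and g="\<lambda>x. a*x+b", OF assms g] show ?thesis by simp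
qed

lemma sm_affine: "sm n f \<Longrightarrow> sm n (\<lambda>x. f (a * x + b))"
proof (induction n arbitrary: f)
  case 0
  have "(\<lambda>x. f (a * x + b)) differentiable (at x)" for x
  proof -
    have "(f has_real_derivative deriv f (a*x+b)) (at (a*x+b))"
      using 0 by (auto simp: DERIV_deriv_iff_real_differentiable)
    from DERIV_affine_comp[OF this]
    show ?thesis using real_differentiable_def by blast
  qed
  then show ?case by simp
next
  case (Suc n)
  then have d: "\<And>x. f differentiable (at x)" by auto
  have dd: "((\<lambda>x. f (a * x + b)) has_real_derivative deriv f (a*x+b) * a) (at x)" for x
  proof -
    have "(f has_real_derivative deriv f (a*x+b)) (at (a*x+b))"
      using d by (auto simp: DERIV_deriv_iff_real_differentiable)
    from DERIV_affine_comp[OF this] show ?thesis .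
  qed
  then have "deriv (\<lambda>x. f (a * x + b)) = (\<lambda>x. deriv f (a*x+b) * a)"
    by (intro ext DERIV_imp_deriv)
  moreover have "sm n (\<lambda>x. deriv f (a*x+b) * a)"
    using Suc by (intro sm_mult sm_const) auto
  ultimately show ?case using dd real_differentiable_def by auto
qed

lemma sm_inverse: "sm n g \<Longrightarrow> (\<And>x. g x \<noteq> 0) \<Longrightarrow> sm n (\<lambda>x. 1 / g x)"
proof (induction n arbitrary: g)
  case 0
  then show ?case by (auto simp: real_differentiable_def intro!: exI derivative_eq_intros
        DERIV_deriv_iff_real_differentiable[THEN iffD2])
next
  case (Suc n)
  then have d: "\<And>x. g differentiable (at x)" by auto
  have dd: "\<And>x. ((\<lambda>x. 1 / g x) has_real_derivative - deriv g x * (1 / g x) * (1 / g x)) (at x)"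
    using d Suc.prems(2)
    by (auto intro!: derivative_eq_intros simp: DERIV_deriv_iff_real_differentiable power2_eq_square)
  then have "deriv (\<lambda>x. 1 / g x) = (\<lambda>x. - deriv g x * (1 / g x) * (1 / g x))"
    by (intro ext DERIV_imp_deriv)
  moreover have "sm n (\<lambda>x. - deriv g x * (1 / g x) * (1 / g x))"
  proof -
    have a: "sm n (\<lambda>x. 1 / g x)" using Suc sm_SucD by blast
    have b: "sm n (\<lambda>x. - deriv g x)"
      using Suc.prems sm_mult[of n "\<lambda>x. -1" "deriv g"] by (simp add: sm_const)
    show ?thesis by (intro sm_mult a b)
  qed
  ultimately show ?case using dd real_differentiable_def by auto
qed

lemma derivs_family:
  fixes F :: "nat \<Rightarrow> real \<Rightarrow> real"
  assumes "\<And>n x. (F n has_real_derivative F (Suc n) x) (at x)"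
  shows "(deriv ^^ n) (F 0) = F n"
proof (induction n)
  case 0 then show ?case by simp
next
  case (Suc n)
  then show ?case using assms by (auto intro!: ext DERIV_imp_deriv)
qed

lemma smooth_family:
  fixes F :: "nat \<Rightarrow> real \<Rightarrow> real"
  assumes "\<And>n x. (F n has_real_derivative F (Suc n) x) (at x)"
  shows "smooth (F 0)"
  unfolding smooth_def derivs_family[where F=F, OF assms] using assms real_differentiable_def by blast

lemma smooth_sm_all: "smooth f \<Longrightarrow> sm n f"
  by (simp add: smooth_sm)

lemma polyexp_tendsto: "((\<lambda>z. poly p z * exp (-z)) \<longlongrightarrow> (0::real)) at_top"
proof -
  have "((\<lambda>z. \<Sum>i\<le>degree p. coeff p i * (z ^ i / exp z)) \<longlongrightarrow> (\<Sum>i\<le>degree p. coeff p i * 0)) at_top"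
    by (intro tendsto_sum tendsto_mult tendsto_const tendsto_power_div_exp_0)
  moreover have "(\<lambda>z. \<Sum>i\<le>degree p. coeff p i * (z ^ i / exp z)) = (\<lambda>z. poly p z * exp (-z))"
    by (rule ext) (simp add: poly_altdef sum_distrib_right exp_minus divide_inverse mult.assoc)
  ultimately show ?thesis by simp
qed

fun psiP :: "nat \<Rightarrow> real poly" where
  "psiP 0 = 1"
| "psiP (Suc n) = [:0,0,1:] * (psiP n - pderiv (psiP n))"

definition psiF :: "nat \<Rightarrow> real \<Rightarrow> real" where
  "psiF n x = (if 0 < x then poly (psiP n) (1/x) * exp (-1/x) else 0)"

lemma psiF_deriv_pos:
  assumes "0 < x"
  shows "(psiF n has_real_derivative psiF (Suc n) x) (at x)"
proof -
  let ?P = "psiP n"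
  have d: "((\<lambda>y. poly ?P (1/y) * exp (-1/y)) has_real_derivative
      poly (pderiv ?P) (1/x) * (- 1 / x^2) * exp (-1/x) + poly ?P (1/x) * (exp (-1/x) * (1/x^2))) (at x)"
    using assms
    by (auto intro!: derivative_eq_intros DERIV_chain2[where f="poly ?P"] simp: power2_eq_square)
  have e: "poly (pderiv ?P) (1/x) * (- 1 / x^2) * exp (-1/x) + poly ?P (1/x) * (exp (-1/x) * (1/x^2))
      = psiF (Suc n) x"
    using assms by (simp add: psiF_def poly_mult poly_diff field_simps power2_eq_square)
  show ?thesis
  proof (rule has_field_derivative_transform_within_open[where S="{0<..}"])
    show "((\<lambda>y. poly ?P (1/y) * exp (-1/y)) has_real_derivative psiF (Suc n) x) (at x)"
      using d e by simp
  qed (use assms in \<open>auto simp: psiF_def\<close>)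
qed

lemma psiF_deriv_neg:
  assumes "x < 0"
  shows "(psiF n has_real_derivative psiF (Suc n) x) (at x)"
proof (rule has_field_derivative_transform_within_open[where S="{..<0}" and f="\<lambda>_. 0"])
  show "((\<lambda>_. 0) has_real_derivative psiF (Suc n) x) (at x)"
    using assms by (simp add: psiF_def)
qed (use assms in \<open>auto simp: psiF_def\<close>)

lemma psiF_deriv_0: "(psiF n has_real_derivative psiF (Suc n) 0) (at 0)"
proof -
  have "((\<lambda>y. (psiF n y - psiF n 0) / (y - 0)) \<longlongrightarrow> 0) (at_left 0)"
  proof (rule Lim_transform_eventually[where f="\<lambda>_. 0"])
    show "\<forall>\<^sub>F x in at_left 0. 0 = (psiF n x - psiF n 0) / (x - 0)"
      unfolding eventually_at_filter by (auto simp: psiF_def)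
  qed simp
  moreover have "((\<lambda>y. (psiF n y - psiF n 0) / (y - 0)) \<longlongrightarrow> 0) (at_right 0)"
  proof -
    have "((\<lambda>z. poly (pCons 0 (psiP n)) z * exp (-z)) \<longlongrightarrow> (0::real)) at_top"
      by (rule polyexp_tendsto)
    then have "((\<lambda>y. poly (pCons 0 (psiP n)) (inverse y) * exp (- inverse y)) \<longlongrightarrow> (0::real)) (at_right 0)"
      by (rule filterlim_compose) (rule filterlim_inverse_at_top_right)
    then show ?thesis
    proof (rule Lim_transform_eventually)
      show "\<forall>\<^sub>F x in at_right 0. poly (pCons 0 (psiP n)) (inverse x) * exp (- inverse x) =
           (psiF n x - psiF n 0) / (x - 0)"
        unfolding eventually_at_filter
        by (auto simp: psiF_def field_simps)
    qed
  qed
  ultimately have "((\<lambda>y. (psiF n y - psiF n 0) / (y - 0)) \<longlongrightarrow> 0) (at 0)"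
    by (simp add: filterlim_at_split)
  then show ?thesis by (simp add: has_field_derivative_iff psiF_def)
qed

lemma psiF_deriv: "(psiF n has_real_derivative psiF (Suc n) x) (at x)"
  using psiF_deriv_pos psiF_deriv_neg psiF_deriv_0 by (cases "x < 0"; cases "x = 0") auto

definition psi :: "real \<Rightarrow> real" where "psi = psiF 0"

lemma psi_eq: "psi x = (if 0 < x then exp (-1/x) else 0)"
  by (simp add: psi_def psiF_def)

lemma smooth_psi: "smooth psi"
  unfolding psi_def by (rule smooth_family[where F=psiF, OF psiF_deriv])

definition beta :: "real \<Rightarrow> real" where
  "beta x = psi x * (1 / (psi x + psi (-1 * x + 1)))"

lemma beta_den_pos: "psi x + psi (-1 * x + 1) > 0"
  by (cases "0 < x") (auto simp: psi_eq add_pos_nonneg add_nonneg_pos)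

lemma smooth_beta: "smooth beta"
proof -
  have "sm n beta" for n
  proof -
    have p: "sm n psi" using smooth_psi smooth_sm by blast
    have "sm n (\<lambda>x. psi (-1 * x + 1))" by (rule sm_affine[OF p])
    then have "sm n (\<lambda>x. 1 / (psi x + psi (-1 * x + 1)))"
      using beta_den_pos by (intro sm_inverse sm_add p) (auto simp: less_le)
    then show ?thesis unfolding beta_def[abs_def] by (intro sm_mult p)
  qed
  then show ?thesis by (simp add: smooth_sm)
qed

lemma beta_le0: "x \<le> 0 \<Longrightarrow> beta x = 0"
  by (simp add: beta_def psi_eq)

lemma beta_ge1: "1 \<le> x \<Longrightarrow> beta x = 1"
  using beta_den_pos[of x] by (simp add: beta_def psi_eq)

lemma beta_nonneg: "0 \<le> beta x"
  using beta_den_pos[of x] by (simp add: beta_def psi_eq)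

lemma beta_le1: "beta x \<le> 1"
proof -
  have "psi x \<le> psi x + psi (-1 * x + 1)" by (simp add: psi_eq)
  then show ?thesis using beta_den_pos[of x] by (simp add: beta_def)
qed

lemma smooth_imp_differentiable: "smooth f \<Longrightarrow> f differentiable (at x)"
  unfolding smooth_def by (metis funpow_0)

lemma smooth_imp_continuous: "smooth f \<Longrightarrow> continuous_on UNIV f"
  by (meson continuous_at_imp_continuous_on differentiable_imp_continuous_within smooth_imp_differentiable)

lemma smooth_deriv: "smooth f \<Longrightarrow> smooth (deriv f)"
  unfolding smooth_def by (metis funpow_Suc_right o_apply)

lemma smooth_add: "smooth f \<Longrightarrow> smooth g \<Longrightarrow> smooth (\<lambda>x. f x + g x)"
  by (simp add: smooth_sm sm_add)
lemma smooth_mult: "smooth f \<Longrightarrow> smooth g \<Longrightarrow> smooth (\<lambda>x. f x * g x)"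
  by (simp add: smooth_sm sm_mult)
lemma smooth_const: "smooth (\<lambda>x. c)"
  by (simp add: smooth_sm sm_const)
lemma smooth_affine: "smooth f \<Longrightarrow> smooth (\<lambda>x. f (a * x + b))"
  by (simp add: smooth_sm sm_affine)
lemma smooth_cmult: "smooth f \<Longrightarrow> smooth (\<lambda>x. c * f x)"
  using smooth_mult[OF smooth_const] by blast
lemma smooth_diff: "smooth f \<Longrightarrow> smooth g \<Longrightarrow> smooth (\<lambda>x. f x - g x)"
  using smooth_add[of f "\<lambda>x. (-1) * g x"] smooth_cmult[of g "-1"] by simp

lemma test_funI: "smooth f \<Longrightarrow> (\<And>x. R < \<bar>x\<bar> \<Longrightarrow> f x = 0) \<Longrightarrow> test_fun f"
  unfolding test_fun_def smooth_def by blast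

lemma test_fun_smooth: "test_fun f \<Longrightarrow> smooth f"
  unfolding test_fun_def smooth_def by blast


definition locint :: "(real \<Rightarrow> real) \<Rightarrow> bool" where
  "locint f \<longleftrightarrow> f \<in> borel_measurable lborel \<and> (\<forall>a b. integrable lborel (\<lambda>x. f x * indicator {a..b} x))"

lemma abs_le_1_plus_sq: "\<bar>y::real\<bar> \<le> 1 + y\<^sup>2"
proof (cases "\<bar>y\<bar> \<le> 1")
  case True then show ?thesis by (simp add: add_increasing2)
next
  case False
  then have "\<bar>y\<bar> * 1 \<le> \<bar>y\<bar> * \<bar>y\<bar>" by (intro mult_left_mono) auto
  then show ?thesis by (simp add: power2_eq_square abs_mult_self_eq)
qed

lemma integrable_ind_Icc [simp]: "integrable lborel (\<lambda>x. indicator {a..b::real} x :: real)"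
  by (rule integrable_real_indicator) (simp_all add: emeasure_lborel_Icc_eq)

lemma sq_int_locint: "sq_int f \<Longrightarrow> locint f"
  unfolding locint_def sq_int_def
proof safe
  fix a b :: real
  assume m: "f \<in> borel_measurable lborel" and i: "integrable lborel (\<lambda>x. (f x)\<^sup>2)"
  have "integrable lborel (\<lambda>x. indicator {a..b} x + indicator {a..b} x *\<^sub>R (f x)\<^sup>2)"
  proof -
    have i1: "integrable lborel (\<lambda>x. indicator {a..b} x *\<^sub>R (f x)\<^sup>2)"
      by (rule integrable_mult_indicator) (simp_all add: i)
    show ?thesis by (rule Bochner_Integration.integrable_add[OF integrable_ind_Icc i1])
  qed
  then show "integrable lborel (\<lambda>x. f x * indicator {a..b} x)"
  proof (rule Bochner_Integration.integrable_bound)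
    show "(\<lambda>x. f x * indicator {a..b} x) \<in> borel_measurable lborel" using m by simp
    show "AE x in lborel. norm (f x * indicator {a..b} x) \<le> norm (indicator {a..b} x + indicator {a..b} x *\<^sub>R (f x)\<^sup>2)"
      using abs_le_1_plus_sq[of "f _"] by (auto split: split_indicator)
  qed
qed

lemma cs_bounded:
  fixes \<phi> :: "real \<Rightarrow> real"
  assumes "continuous_on UNIV \<phi>" "\<And>x. R < \<bar>x\<bar> \<Longrightarrow> \<phi> x = 0"
  shows "\<exists>B. \<forall>x. \<bar>\<phi> x\<bar> \<le> B"
proof -
  have "compact (\<phi> ` {-R..R})"
    by (rule compact_continuous_image) (auto intro: continuous_on_subset[OF assms(1)])
  then obtain B where B: "\<And>y. y \<in> \<phi> ` {-R..R} \<Longrightarrow> \<bar>y\<bar> \<le> B"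
    by (metis bounded_real compact_imp_bounded)
  have "\<bar>\<phi> x\<bar> \<le> max B 0" for x
  proof (cases "R < \<bar>x\<bar>")
    case True then show ?thesis using assms(2)[of x] by simp
  next
    case False
    then have "x \<in> {-R..R}" by auto
    then have "\<phi> x \<in> \<phi> ` {-R..R}" by blast
    then show ?thesis using B by force
  qed
  then show ?thesis by blast
qed

lemma locint_mult_cs:
  assumes f: "locint f" and c: "continuous_on UNIV \<phi>" and s: "\<And>x. R < \<bar>x\<bar> \<Longrightarrow> \<phi> x = 0"
  shows "integrable lborel (\<lambda>x. f x * \<phi> x)"
proof -
  obtain B where B: "\<And>x. \<bar>\<phi> x\<bar> \<le> B" using cs_bounded[OF c s] by blast
  have I: "integrable lborel (\<lambda>x. B * (f x * indicator {-R..R} x))"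
    using f unfolding locint_def by auto
  show ?thesis
    apply (rule Bochner_Integration.integrable_bound[OF I])
  proof -
    have "\<phi> \<in> borel_measurable borel" using c by (rule borel_measurable_continuous_onI)
    then show "(\<lambda>x. f x * \<phi> x) \<in> borel_measurable lborel" using f unfolding locint_def
      by (auto intro: borel_measurable_times)
    show "AE x in lborel. norm (f x * \<phi> x) \<le> norm (B * (f x * indicator {- R..R} x))"
    proof (intro AE_I2)
      fix x
      show "norm (f x * \<phi> x) \<le> norm (B * (f x * indicator {- R..R} x))"
      proof (cases "R < \<bar>x\<bar>")
        case True then show ?thesis using s by simp
      next
        case False
        then have "x \<in> {-R..R}" by auto
        then show ?thesis using B[of x] by (simp add: abs_mult mult_right_mono mult.commute)
      qed
    qed
  qed
qed

lemma test_fun_cont: "test_fun \<phi> \<Longrightarrow> continuous_on UNIV \<phi>"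
  using smooth_imp_continuous test_fun_smooth by blast

lemma test_fun_supp: "test_fun \<phi> \<Longrightarrow> \<exists>R. \<forall>x. R < \<bar>x\<bar> \<longrightarrow> \<phi> x = 0"
  unfolding test_fun_def by blast

lemma locint_test: "locint f \<Longrightarrow> test_fun \<phi> \<Longrightarrow> integrable lborel (\<lambda>x. f x * \<phi> x)"
  using locint_mult_cs test_fun_cont test_fun_supp by metis

lemma test_fun_deriv: "test_fun \<phi> \<Longrightarrow> test_fun (deriv \<phi>)"
proof -
  assume t: "test_fun \<phi>"
  obtain R where R: "\<And>x. R < \<bar>x\<bar> \<Longrightarrow> \<phi> x = 0" using test_fun_supp[OF t] by blast
  have "deriv \<phi> x = 0" if "R < \<bar>x\<bar>" for x
  proof -
    have o: "open {y. R < \<bar>y\<bar>}" by (intro open_Collect_less continuous_intros)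
    have "(\<phi> has_real_derivative 0) (at x)"
      by (rule has_field_derivative_transform_within_open[where f="\<lambda>_. 0" and S="{y. R < \<bar>y\<bar>}"])
        (use o that R in auto)
    then show ?thesis by (rule DERIV_imp_deriv)
  qed
  then show ?thesis using smooth_deriv[OF test_fun_smooth[OF t]] by (intro test_funI) auto
qed

lemma test_fun_lin:
  assumes "test_fun \<phi>" "test_fun \<psi>"
  shows "test_fun (\<lambda>x. a * \<phi> x + b * \<psi> x)"
proof -
  obtain R1 where R1: "\<And>x. R1 < \<bar>x\<bar> \<Longrightarrow> \<phi> x = 0" using test_fun_supp[OF assms(1)] by blast
  obtain R2 where R2: "\<And>x. R2 < \<bar>x\<bar> \<Longrightarrow> \<psi> x = 0" using test_fun_supp[OF assms(2)] by blast
  show ?thesis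
    by (rule test_funI[where R="max R1 R2"])
      (use R1 R2 test_fun_smooth[OF assms(1)] test_fun_smooth[OF assms(2)] in
       \<open>auto intro!: smooth_add smooth_cmult\<close>)
qed

definition tf :: "real \<Rightarrow> real \<Rightarrow> real \<Rightarrow> real \<Rightarrow> real" where
  "tf a b e x = beta ((x - a) / e) - beta ((x - b) / e)"

lemma tf_test:
  assumes "0 < e" "a \<le> b"
  shows "test_fun (tf a b e)"
proof (rule test_funI[where R="\<bar>a\<bar> + \<bar>b\<bar> + e"])
  have h: "(\<lambda>x. beta ((1/e) * x + (-c/e))) = (\<lambda>x. beta ((x-c)/e))" for c
    by (rule ext) (simp add: diff_divide_distrib)
  have "smooth (\<lambda>x. beta ((x-c)/e))" for c
    using smooth_affine[OF smooth_beta, of "1/e" "-c/e"] unfolding h .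
  then show "smooth (tf a b e)"
    unfolding tf_def[abs_def] by (intro smooth_diff)
next
  fix x assume x: "\<bar>a\<bar> + \<bar>b\<bar> + e < \<bar>x\<bar>"
  show "tf a b e x = 0"
  proof (cases "x < 0")
    case True
    then have "x < a" "x < b" using x assms by auto
    then have "(x - a)/e \<le> 0" "(x - b)/e \<le> 0" using assms by (auto simp: divide_nonpos_pos)
    then show ?thesis by (simp add: tf_def beta_le0)
  next
    case False
    then have "x - b \<ge> e" "x - a \<ge> e" using x assms by auto
    then have "1 \<le> (x - a)/e" "1 \<le> (x - b)/e" using assms by auto
    then show ?thesis by (simp add: tf_def beta_ge1)
  qed
qed

lemma tf_bound: "\<bar>tf a b e x\<bar> \<le> 1"
  using beta_nonneg beta_le1 unfolding tf_def by (smt (verit))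

lemma tf_out:
  assumes "0 < e" "a \<le> b" "x \<notin> {a..b+e}"
  shows "tf a b e x = 0"
proof (cases "x < a")
  case True
  then have "(x - a)/e \<le> 0" "(x - b)/e \<le> 0" using assms by (auto simp: divide_nonpos_pos)
  then show ?thesis by (simp add: tf_def beta_le0)
next
  case False
  then have "x - b \<ge> e" "x - a \<ge> e" using assms by auto
  then have "1 \<le> (x - a)/e" "1 \<le> (x - b)/e" using assms by auto
  then show ?thesis by (simp add: tf_def beta_ge1)
qed

lemma eventually_large_mult:
  assumes "0 < d"
  shows "\<forall>\<^sub>F n in sequentially. 1 \<le> d * real (Suc n)"
proof -
  obtain N :: nat where N: "1 / d < real N" using reals_Archimedean2 by blast
  show ?thesis
  proof (rule eventually_sequentiallyI[of N])
    fix n assume "N \<le> n"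
    then have "1 / d < real (Suc n)" using N by linarith
    then show "1 \<le> d * real (Suc n)" using assms by (simp add: field_simps)
  qed
qed

lemma tf_lim:
  assumes "a \<le> b"
  shows "(\<lambda>n. tf a b (1 / real (Suc n)) x) \<longlonglongrightarrow> indicator {a<..b} x"
proof (cases "x \<le> a")
  case True
  then have "tf a b (1 / real (Suc n)) x = 0" for n
    using assms by (simp add: tf_def beta_le0 mult_nonpos_nonneg)
  then show ?thesis using True by (simp add: indicator_def)
next
  case False
  note xa = this
  show ?thesis
  proof (cases "x \<le> b")
    case True
    have xa': "0 < x - a" using xa by simp
    have "\<forall>\<^sub>F n in sequentially. tf a b (1 / real (Suc n)) x = 1"
      using eventually_large_mult[OF xa']
    proof (elim eventually_mono)
      fix n assume "1 \<le> (x - a) * real (Suc n)"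
      then show "tf a b (1 / real (Suc n)) x = 1"
        using True by (simp add: tf_def beta_le0 beta_ge1 mult_nonpos_nonneg)
    qed
    then show ?thesis using True xa by (simp add: tendsto_eventually indicator_def)
  next
    case False
    have xb': "0 < x - b" using False by simp
    have "\<forall>\<^sub>F n in sequentially. tf a b (1 / real (Suc n)) x = 0"
      using eventually_large_mult[OF xb']
    proof (elim eventually_mono)
      fix n assume 1: "1 \<le> (x - b) * real (Suc n)"
      moreover have "(x - b) * real (Suc n) \<le> (x - a) * real (Suc n)"
        using assms by (intro mult_right_mono) auto
      ultimately have "1 \<le> (x - a) * real (Suc n)" by linarith
      then show "tf a b (1 / real (Suc n)) x = 0"
        using 1 by (simp add: tf_def beta_ge1)
    qed
    then show ?thesis using False by (simp add: tendsto_eventually indicator_def)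
  qed
qed

lemma tf_integral_lim:
  assumes k: "locint k" and ab: "a \<le> b"
  shows "(\<lambda>n. LINT x|lborel. k x * tf a b (1 / real (Suc n)) x) \<longlonglongrightarrow> (LINT x|lborel. k x * indicator {a<..b} x)"
proof (rule integral_dominated_convergence[where w="\<lambda>x. \<bar>k x * indicator {a..b+1} x\<bar>"])
  have km: "k \<in> borel_measurable lborel" using k by (simp add: locint_def)
  show "(\<lambda>x. k x * indicator {a<..b} x) \<in> borel_measurable lborel" using km by simp
  show "(\<lambda>x. k x * tf a b (1 / real (Suc n)) x) \<in> borel_measurable lborel" for n
    using locint_test[OF k tf_test[OF _ ab]] by (auto intro: borel_measurable_integrable)
  show "integrable lborel (\<lambda>x. \<bar>k x * indicator {a..b + 1} x\<bar>)"
    using k by (auto simp: locint_def)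
  show "AE x in lborel. (\<lambda>n. k x * tf a b (1 / real (Suc n)) x) \<longlonglongrightarrow> k x * indicator {a<..b} x"
    by (intro AE_I2 tendsto_mult tendsto_const tf_lim ab)
  show "AE x in lborel. norm (k x * tf a b (1 / real (Suc n)) x) \<le> \<bar>k x * indicator {a..b + 1} x\<bar>" for n
  proof (intro AE_I2)
    fix x
    show "norm (k x * tf a b (1 / real (Suc n)) x) \<le> \<bar>k x * indicator {a..b + 1} x\<bar>"
    proof (cases "x \<in> {a..b+1}")
      case True
      then show ?thesis using tf_bound[of a b "1 / real (Suc n)" x]
        by (simp add: abs_mult mult_left_le)
    next
      case False
      have le: "b + 1 / real (Suc n) \<le> b + 1" by simp
      have "x \<notin> {a..b + 1 / real (Suc n)}"
      proof
        assume "x \<in> {a..b + 1 / real (Suc n)}"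
        then have "x \<in> {a..b+1}" using le by (smt (verit) atLeastAtMost_iff)
        with False show False by simp
      qed
      then show ?thesis using tf_out[OF _ ab] False by simp
    qed
  qed
qed


lemma measure_density_real:
  fixes g :: "real \<Rightarrow> real"
  assumes g: "integrable lborel g" and nn: "\<And>x. 0 \<le> g x" and A: "A \<in> sets borel"
  shows "measure (density lborel (\<lambda>x. ennreal (g x))) A = (LINT x|lborel. g x * indicator A x)"
proof -
  have gm: "g \<in> borel_measurable lborel" using g by (rule borel_measurable_integrable)
  have i: "integrable lborel (\<lambda>x. g x * indicator A x)"
    using integrable_mult_indicator[of A lborel g] A g by (simp add: mult.commute)
  have "emeasure (density lborel (\<lambda>x. ennreal (g x))) A = (\<integral>\<^sup>+ x. ennreal (g x) * indicator A x \<partial>lborel)"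
    using gm A by (intro emeasure_density) auto
  also have "\<dots> = (\<integral>\<^sup>+ x. ennreal (g x * indicator A x) \<partial>lborel)"
    by (intro nn_integral_cong) (auto split: split_indicator)
  also have "\<dots> = ennreal (LINT x|lborel. g x * indicator A x)"
    using i nn by (intro nn_integral_eq_integral) auto
  finally show ?thesis
    unfolding measure_def using nn by (simp add: integral_nonneg_AE)
qed

lemma finite_borel_density:
  fixes g :: "real \<Rightarrow> real"
  assumes g: "integrable lborel g" and nn: "\<And>x. 0 \<le> g x"
  shows "finite_borel_measure (density lborel (\<lambda>x. ennreal (g x)))"
proof -
  have gm: "g \<in> borel_measurable lborel" using g by (rule borel_measurable_integrable)
  have "emeasure (density lborel (\<lambda>x. ennreal (g x))) UNIV = (\<integral>\<^sup>+ x. ennreal (g x) * indicator UNIV x \<partial>lborel)"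
    using gm by (intro emeasure_density) auto
  also have "\<dots> = (\<integral>\<^sup>+ x. ennreal (g x) \<partial>lborel)" by simp
  also have "\<dots> = ennreal (LINT x|lborel. g x)"
    using g nn by (intro nn_integral_eq_integral) auto
  finally have "emeasure (density lborel (\<lambda>x. ennreal (g x))) UNIV \<noteq> \<infinity>" by simp
  then show ?thesis
    unfolding finite_borel_measure_def finite_borel_measure_axioms_def
    by (auto intro!: finite_measureI)
qed

lemma FL_intervals:
  assumes k: "locint k"
    and h: "\<And>a b. a \<le> b \<Longrightarrow> (LINT x|lborel. k x * indicator {a<..b} x) = 0"
  shows "AE x in lborel. k x = 0"
proof -
  have km: "k \<in> borel_measurable lborel" using k by (simp add: locint_def)
  have main: "AE x in lborel. x \<in> {-real n<..real n} \<longrightarrow> k x = 0" for n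
  proof -
    define N where "N = real n"
    define kp where "kp x = max 0 (k x) * indicator {-N<..N} x" for x
    define kn where "kn x = max 0 (- k x) * indicator {-N<..N} x" for x
    have ik: "integrable lborel (\<lambda>x. k x * indicator {-N..N} x)" using k by (simp add: locint_def)
    have bp: "norm (kp x) \<le> norm (k x * indicator {-N..N} x)" for x
      by (cases "x \<in> {-N<..N}") (auto simp: kp_def)
    have bn: "norm (kn x) \<le> norm (k x * indicator {-N..N} x)" for x
      by (cases "x \<in> {-N<..N}") (auto simp: kn_def)
    have ikp: "integrable lborel kp"
      apply (rule Bochner_Integration.integrable_bound[OF ik])
      using km bp unfolding kp_def by auto
    have ikn: "integrable lborel kn"
      apply (rule Bochner_Integration.integrable_bound[OF ik])
      using km bn unfolding kn_def by auto
    have nnp: "\<And>x. 0 \<le> kp x" and nnn: "\<And>x. 0 \<le> kn x" by (auto simp: kp_def kn_def)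
    have f1: "finite_borel_measure (density lborel (\<lambda>x. ennreal (kp x)))"
      by (rule finite_borel_density[OF ikp nnp])
    have f2: "finite_borel_measure (density lborel (\<lambda>x. ennreal (kn x)))"
      by (rule finite_borel_density[OF ikn nnn])
    have cdfeq: "cdf (density lborel (\<lambda>x. ennreal (kp x))) = cdf (density lborel (\<lambda>x. ennreal (kn x)))"
    proof
      fix y
      have "cdf (density lborel (\<lambda>x. ennreal (kp x))) y - cdf (density lborel (\<lambda>x. ennreal (kn x))) y
          = (LINT x|lborel. kp x * indicator {..y} x) - (LINT x|lborel. kn x * indicator {..y} x)"
        unfolding cdf_def2 by (simp add: measure_density_real[OF ikp nnp] measure_density_real[OF ikn nnn])
      also have "\<dots> = (LINT x|lborel. kp x * indicator {..y} x - kn x * indicator {..y} x)"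
      proof (rule Bochner_Integration.integral_diff[symmetric])
        show "integrable lborel (\<lambda>x. kp x * indicator {..y} x)"
          using integrable_mult_indicator[of "{..y}" lborel kp] ikp by (simp add: mult.commute)
        show "integrable lborel (\<lambda>x. kn x * indicator {..y} x)"
          using integrable_mult_indicator[of "{..y}" lborel kn] ikn by (simp add: mult.commute)
      qed
      also have "\<dots> = (LINT x|lborel. k x * indicator {-N<..min N y} x)"
      proof (intro Bochner_Integration.integral_cong refl)
        fix x
        have m: "max 0 (k x) - max 0 (- k x) = k x" by linarith
        have i: "indicator {-N<..N} x * indicator {..y} x = (indicator {-N<..min N y} x :: real)"
          by (simp split: split_indicator)
        have "kp x * indicator {..y} x - kn x * indicator {..y} x =
            (max 0 (k x) - max 0 (- k x)) * (indicator {-N<..N} x * indicator {..y} x)"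
          by (simp add: kp_def kn_def algebra_simps)
        also have "\<dots> = k x * indicator {-N<..min N y} x" by (simp only: m i)
        finally show "kp x * indicator {..y} x - kn x * indicator {..y} x = k x * indicator {-N<..min N y} x" .
      qed
      also have "\<dots> = 0"
      proof (cases "-N \<le> min N y")
        case True then show ?thesis by (rule h)
      next
        case False
        then have e: "{-N<..min N y} = {}" by auto
        show ?thesis unfolding e by simp
      qed
      finally show "cdf (density lborel (\<lambda>x. ennreal (kp x))) y = cdf (density lborel (\<lambda>x. ennreal (kn x))) y"
        by simp
    qed
    have "density lborel (\<lambda>x. ennreal (kp x)) = density lborel (\<lambda>x. ennreal (kn x))"
      by (rule cdf_unique'[OF f1 f2 cdfeq])
    then have "AE x in lborel. ennreal (kp x) = ennreal (kn x)"
      using ikp ikn by (intro sigma_finite_measure.density_unique[OF sigma_finite_lborel]) (auto dest: borel_measurable_integrable)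
    then show ?thesis
    proof (rule eventually_mono)
      fix x assume "ennreal (kp x) = ennreal (kn x)"
      then have e: "kp x = kn x" using nnp nnn by (simp add: ennreal_inj)
      show "x \<in> {-real n<..real n} \<longrightarrow> k x = 0"
      proof
        assume "x \<in> {-real n<..real n}"
        then have "max 0 (k x) = max 0 (- k x)" using e by (simp add: kp_def kn_def N_def)
        then show "k x = 0" by linarith
      qed
    qed
  qed
  then have "AE x in lborel. \<forall>n. x \<in> {-real n<..real n} \<longrightarrow> k x = 0"
    by (rule AE_all_countable[THEN iffD2, rule_format])
  then show ?thesis
  proof (rule eventually_mono)
    fix x assume a: "\<forall>n. x \<in> {-real n<..real n} \<longrightarrow> k x = 0"
    obtain n :: nat where "\<bar>x\<bar> < real n" using reals_Archimedean2 by blast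
    then have "x \<in> {-real n<..real n}" by (simp add: abs_less_iff)
    then show "k x = 0" using a by blast
  qed
qed

lemma FL:
  assumes k: "locint k" and h: "\<And>\<phi>. test_fun \<phi> \<Longrightarrow> (LINT x|lborel. k x * \<phi> x) = 0"
  shows "AE x in lborel. k x = 0"
proof (rule FL_intervals[OF k])
  fix a b :: real assume ab: "a \<le> b"
  have "(\<lambda>n. LINT x|lborel. k x * tf a b (1 / real (Suc n)) x) \<longlonglongrightarrow> (LINT x|lborel. k x * indicator {a<..b} x)"
    by (rule tf_integral_lim[OF k ab])
  moreover have z: "(LINT x|lborel. k x * tf a b (1 / real (Suc n)) x) = 0" for n
    by (rule h[OF tf_test[OF _ ab]]) simp
  then have "(\<lambda>n. LINT x|lborel. k x * tf a b (1 / real (Suc n)) x) \<longlonglongrightarrow> 0"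
    by simp
  ultimately show "(LINT x|lborel. k x * indicator {a<..b} x) = 0"
    by (rule LIMSEQ_unique)
qed

lemma cont_AE_eq:
  fixes f g :: "real \<Rightarrow> real"
  assumes f: "continuous_on UNIV f" and g: "continuous_on UNIV g" and ae: "AE x in lborel. f x = g x"
  shows "f = g"
proof (rule ccontr)
  assume "f \<noteq> g"
  then obtain x0 where x0: "f x0 \<noteq> g x0" by auto
  have "open {x. f x \<noteq> g x}"
    using f g by (intro open_Collect_neq) (auto simp: continuous_on_eq_continuous_at)
  then obtain r where r: "0 < r" "ball x0 r \<subseteq> {x. f x \<noteq> g x}"
    using x0 by (auto simp: open_contains_ball)
  from ae obtain N where N: "{x \<in> space lborel. \<not> f x = g x} \<subseteq> N" "emeasure lborel N = 0" "N \<in> sets lborel"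
    by (rule AE_E)
  have "{x0 - r<..<x0 + r} \<subseteq> N"
    using r N(1) by (auto simp: ball_def dist_real_def abs_less_iff subset_iff)
  then have "emeasure lborel {x0 - r<..<x0 + r} \<le> emeasure lborel N"
    using N(3) by (intro emeasure_mono) auto
  then show False using N(2) r(1) by simp
qed


lemma at_within_Icc_interior: "a < x \<Longrightarrow> x < b \<Longrightarrow> at x within {a..b} = at (x::real)"
  by (rule at_within_interior) simp

lemma FTC_cont:
  fixes f :: "real \<Rightarrow> real" and c x :: real
  assumes "continuous_on UNIV f"
  shows "((\<lambda>u. LBINT y=c..u. f y) has_real_derivative f x) (at x)"
proof -
  have "((\<lambda>u. LBINT y=c..u. f y) has_vector_derivative f x) (at x within {min c x - 1..max c x + 1})"
    by (rule interval_integral_FTC2) (auto intro: continuous_on_subset[OF assms])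
  moreover have "at x within {min c x - 1..max c x + 1} = at x" by (rule at_within_Icc_interior) auto
  ultimately show ?thesis by (simp add: has_real_derivative_iff_has_vector_derivative)
qed

lemma integral_supp_Icc:
  fixes f :: "real \<Rightarrow> real"
  assumes "\<And>y. y \<notin> {a..b} \<Longrightarrow> f y = 0" "a \<le> b"
  shows "(LBINT y=a..b. f y) = (LINT y|lborel. f y)"
proof -
  have "(LBINT y=a..b. f y) = (LINT y|lborel. indicator {a..b} y *\<^sub>R f y)"
    using assms(2) by (simp add: interval_integral_Icc set_lebesgue_integral_def)
  also have "\<dots> = (LINT y|lborel. f y)"
    by (intro Bochner_Integration.integral_cong refl) (use assms(1) in \<open>auto split: split_indicator\<close>)
  finally show ?thesis .
qed

lemma cs_FTC:
  fixes f F :: "real \<Rightarrow> real"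
  assumes c: "continuous_on UNIV f" and d: "\<And>x. (F has_real_derivative f x) (at x)"
    and z: "\<And>x. x \<notin> {a..b} \<Longrightarrow> f x = 0" and ab: "a \<le> b"
  shows "(LINT x|lborel. f x) = F b - F a"
proof -
  have "(LBINT x=a..b. f x) = F b - F a"
  proof (rule interval_integral_FTC_finite)
    show "continuous_on {min a b..max a b} f" by (rule continuous_on_subset[OF c]) auto
    fix x
    show "(F has_vector_derivative f x) (at x within {min a b..max a b})"
      using d[of x] by (simp add: has_real_derivative_iff_has_vector_derivative[symmetric] has_field_derivative_at_within)
  qed
  then show ?thesis using integral_supp_Icc[OF z ab] by simp
qed

lemma locint_const: "locint (\<lambda>x. c)"
  unfolding locint_def
  using integrable_mult_left[OF integrable_ind_Icc, of c] by auto

lemma locint_add: fixes f g :: "real \<Rightarrow> real" shows "locint f \<Longrightarrow> locint g \<Longrightarrow> locint (\<lambda>x. f x + g x)"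
  unfolding locint_def by (auto simp: distrib_right intro!: Bochner_Integration.integrable_add)

lemma locint_cmult: fixes f :: "real \<Rightarrow> real" shows "locint f \<Longrightarrow> locint (\<lambda>x. c * f x)"
  unfolding locint_def
  by (auto simp: mult.assoc intro!: integrable_mult_right)

lemma locint_diff: fixes f g :: "real \<Rightarrow> real" shows "locint f \<Longrightarrow> locint g \<Longrightarrow> locint (\<lambda>x. f x - g x)"
  using locint_add[of f "\<lambda>x. (-1) * g x"] locint_cmult[of g "-1"] by simp

lemma locint_cont: "continuous_on UNIV f \<Longrightarrow> locint f"
  unfolding locint_def
  by (auto intro!: borel_integrable_atLeastAtMost borel_measurable_continuous_onI
      simp: continuous_on_eq_continuous_at)

lemma test_integrable: "test_fun \<phi> \<Longrightarrow> integrable lborel \<phi>"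
  using locint_test[OF locint_const[of 1]] by simp

lemma deriv_loc_const:
  fixes f :: "real \<Rightarrow> real"
  assumes "open S" "x \<in> S" "\<And>y. y \<in> S \<Longrightarrow> f y = c"
  shows "deriv f x = 0"
proof -
  have "(f has_real_derivative 0) (at x)"
    by (rule has_field_derivative_transform_within_open[where f="\<lambda>_. c" and S=S]) (use assms in auto)
  then show ?thesis by (rule DERIV_imp_deriv)
qed

definition psi0 :: "real \<Rightarrow> real" where "psi0 = deriv beta"

lemma psi0_out: "x \<notin> {0..1} \<Longrightarrow> psi0 x = 0"
proof -
  assume x: "x \<notin> {0..1}"
  show ?thesis
  proof (cases "x < 0")
    case True
    show ?thesis unfolding psi0_def
      by (rule deriv_loc_const[where S="{..<0}" and c=0]) (use True in \<open>auto simp: beta_le0\<close>)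
  next
    case False
    then have "1 < x" using x by auto
    then show ?thesis unfolding psi0_def
      by (intro deriv_loc_const[where S="{1<..}" and c=1]) (auto simp: beta_ge1)
  qed
qed

lemma test_psi0: "test_fun psi0"
proof (rule test_funI[where R=1])
  show "smooth psi0" by (simp add: psi0_def smooth_deriv smooth_beta)
  fix x :: real assume "1 < \<bar>x\<bar>"
  then have "x \<notin> {0..1}" by auto
  then show "psi0 x = 0" by (rule psi0_out)
qed

lemma beta_deriv: "(beta has_real_derivative psi0 x) (at x)"
  unfolding psi0_def using smooth_imp_differentiable[OF smooth_beta]
  by (simp add: DERIV_deriv_iff_real_differentiable)

lemma int_psi0: "(LINT x|lborel. psi0 x) = 1"
proof -
  have "(LINT x|lborel. psi0 x) = beta 1 - beta 0"
    by (rule cs_FTC[OF test_fun_cont[OF test_psi0] beta_deriv psi0_out]) auto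
  then show ?thesis by (simp add: beta_le0 beta_ge1)
qed

lemma test_antideriv:
  assumes t: "test_fun \<psi>" and z: "(LINT x|lborel. \<psi> x) = 0"
  shows "\<exists>\<Phi>. test_fun \<Phi> \<and> deriv \<Phi> = \<psi>"
proof -
  obtain R where R: "\<And>x. R < \<bar>x\<bar> \<Longrightarrow> \<psi> x = 0" using test_fun_supp[OF t] by blast
  define R' :: real where "R' = \<bar>R\<bar> + 1"
  define \<Phi> where "\<Phi> u = (LBINT y=-R'..u. \<psi> y)" for u :: real
  have c: "continuous_on UNIV \<psi>" by (rule test_fun_cont[OF t])
  have d: "(\<Phi> has_real_derivative \<psi> x) (at x)" for x
    unfolding \<Phi>_def[abs_def] by (rule FTC_cont[OF c])
  then have dP: "deriv \<Phi> = \<psi>" by (intro ext DERIV_imp_deriv)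
  have "sm n \<Phi>" for n
  proof (cases n)
    case 0 then show ?thesis using d real_differentiable_def by auto
  next
    case (Suc m)
    then show ?thesis using d real_differentiable_def dP smooth_sm test_fun_smooth[OF t] by auto
  qed
  then have sP: "smooth \<Phi>" by (simp add: smooth_sm)
  have supp: "\<Phi> x = 0" if x: "R' < \<bar>x\<bar>" for x
  proof (cases "x < 0")
    case True
    then have xl: "x \<le> -R'" using x by auto
    have "(LBINT y=x..-R'. \<psi> y) = (LINT y|lborel. indicator {x..-R'} y *\<^sub>R \<psi> y)"
      using xl by (simp add: interval_integral_Icc set_lebesgue_integral_def)
    also have "\<dots> = 0"
    proof -
      have "indicator {x..-R'} y *\<^sub>R \<psi> y = 0" for y
        using R[of y] by (cases "y \<in> {x..-R'}") (auto simp: R'_def)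
      then have "(\<lambda>y. indicator {x..-R'} y *\<^sub>R \<psi> y) = (\<lambda>y. 0)" by (rule ext)
      then show ?thesis by (simp only:) simp
    qed
    finally have "(LBINT y=x..-R'. \<psi> y) = 0" .
    then show ?thesis unfolding \<Phi>_def by (subst interval_integral_endpoints_reverse) simp
  next
    case False
    then have xr: "R' < x" using x by auto
    have "\<Phi> x = (LINT y|lborel. \<psi> y)" unfolding \<Phi>_def
    proof (rule integral_supp_Icc)
      fix y assume "y \<notin> {-R'..x}"
      then have "R < \<bar>y\<bar>" using xr by (auto simp: R'_def)
      then show "\<psi> y = 0" by (rule R)
    qed (use xr in \<open>auto simp: R'_def\<close>)
    then show ?thesis using z by simp
  qed
  show ?thesis using sP supp dP by (intro exI[of _ \<Phi>]) (auto intro: test_funI)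
qed

lemma DBR:
  assumes h: "locint h" and z: "\<And>\<phi>. test_fun \<phi> \<Longrightarrow> (LINT x|lborel. h x * deriv \<phi> x) = 0"
  shows "\<exists>c. AE x in lborel. h x = c"
proof -
  define c where "c = (LINT x|lborel. h x * psi0 x)"
  have key: "(LINT x|lborel. (h x - c) * \<phi> x) = 0" if t: "test_fun \<phi>" for \<phi>
  proof -
    define I where "I = (LINT x|lborel. \<phi> x)"
    define chi where "chi x = 1 * \<phi> x + (- I) * psi0 x" for x
    have tc: "test_fun chi" unfolding chi_def[abs_def] by (rule test_fun_lin[OF t test_psi0])
    have ip: "integrable lborel \<phi>" by (rule test_integrable[OF t])
    have i0: "integrable lborel psi0" by (rule test_integrable[OF test_psi0])
    have "(LINT x|lborel. chi x) = I - I * (LINT x|lborel. psi0 x)"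
      unfolding chi_def using ip i0 by (simp add: I_def)
    then have "(LINT x|lborel. chi x) = 0" by (simp add: int_psi0)
    then obtain \<Phi> where P: "test_fun \<Phi>" "deriv \<Phi> = chi" using test_antideriv[OF tc] by blast
    have "(LINT x|lborel. h x * chi x) = 0" using z[OF P(1)] P(2) by simp
    moreover have hp: "integrable lborel (\<lambda>x. h x * \<phi> x)" by (rule locint_test[OF h t])
    moreover have h0: "integrable lborel (\<lambda>x. h x * psi0 x)" by (rule locint_test[OF h test_psi0])
    moreover have "(LINT x|lborel. h x * chi x) = (LINT x|lborel. h x * \<phi> x) - I * c"
    proof -
      have "(LINT x|lborel. h x * chi x) = (LINT x|lborel. h x * \<phi> x - I * (h x * psi0 x))"
        by (intro Bochner_Integration.integral_cong refl) (simp add: chi_def algebra_simps)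
      also have "\<dots> = (LINT x|lborel. h x * \<phi> x) - I * c"
        using hp h0 by (simp add: c_def)
      finally show ?thesis .
    qed
    moreover have "(LINT x|lborel. (h x - c) * \<phi> x) = (LINT x|lborel. h x * \<phi> x) - c * I"
    proof -
      have "(LINT x|lborel. (h x - c) * \<phi> x) = (LINT x|lborel. h x * \<phi> x - c * \<phi> x)"
        by (intro Bochner_Integration.integral_cong refl) (simp add: algebra_simps)
      also have "\<dots> = (LINT x|lborel. h x * \<phi> x) - c * I"
        using hp ip by (simp add: I_def)
      finally show ?thesis .
    qed
    ultimately show ?thesis by (simp add: mult.commute)
  qed
  have "AE x in lborel. h x - c = 0"
    by (rule FL[OF locint_diff[OF h locint_const] key])
  then show ?thesis by (intro exI[of _ c]) auto
qed


definition Kf :: "real \<Rightarrow> real \<Rightarrow> real" where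
  "Kf x y = (if 0 \<le> y \<and> y \<le> x then 1 else if x \<le> y \<and> y \<le> 0 then -1 else 0)"

definition Gi :: "(real \<Rightarrow> real) \<Rightarrow> real \<Rightarrow> real" where
  "Gi g x = interval_lebesgue_integral lborel (ereal 0) (ereal x) g"

lemma Kf_bound: "\<bar>Kf x y\<bar> \<le> 1"
  by (simp add: Kf_def)

lemma Kf_nz: "Kf x y \<noteq> 0 \<Longrightarrow> \<bar>y\<bar> \<le> \<bar>x\<bar>"
  by (auto simp: Kf_def split: if_splits)

lemma Kf_meas [measurable]: "(\<lambda>y. Kf x y) \<in> borel_measurable borel"
  unfolding Kf_def by measurable

lemma Kf_meas2 [measurable]: "(\<lambda>p. Kf (fst p) (snd p)) \<in> borel_measurable (lborel \<Otimes>\<^sub>M lborel)"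
  unfolding Kf_def by measurable

lemma Gi_K:
  assumes g: "locint g"
  shows "Gi g x = (LINT y|lborel. g y * Kf x y)"
proof (cases "0 \<le> x")
  case True
  have "Gi g x = (LINT y|lborel. indicator {0..x} y *\<^sub>R g y)"
    using True by (simp add: Gi_def interval_integral_Icc set_lebesgue_integral_def)
  also have "\<dots> = (LINT y|lborel. g y * Kf x y)"
    by (intro Bochner_Integration.integral_cong refl) (use True in \<open>auto simp: Kf_def split: split_indicator\<close>)
  finally show ?thesis .
next
  case False
  have "Gi g x = - interval_lebesgue_integral lborel (ereal x) (ereal 0) g"
    unfolding Gi_def by (rule interval_integral_endpoints_reverse)
  also have "\<dots> = - (LINT y|lborel. indicator {x..0} y *\<^sub>R g y)"
    using False by (simp add: interval_integral_Icc set_lebesgue_integral_def)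
  also have "\<dots> = (LINT y|lborel. - (indicator {x..0} y *\<^sub>R g y))"
    by simp
  also have "\<dots> = (LINT y|lborel. g y * Kf x y)"
    by (intro Bochner_Integration.integral_cong refl) (use False in \<open>auto simp: Kf_def split: split_indicator\<close>)
  finally show ?thesis .
qed

lemma Kf_lim:
  assumes "y \<noteq> 0" "y \<noteq> x" "u \<longlonglongrightarrow> x"
  shows "\<forall>\<^sub>F n in sequentially. Kf (u n) y = Kf x y"
proof (cases "y < x")
  case True
  from order_tendstoD(1)[OF assms(3) True] show ?thesis
    by (rule eventually_mono) (use True assms(1) in \<open>auto simp: Kf_def\<close>)
next
  case False
  then have "x < y" using assms(2) by auto
  from order_tendstoD(2)[OF assms(3) this] show ?thesis
    by (rule eventually_mono) (use \<open>x < y\<close> assms(1) in \<open>auto simp: Kf_def\<close>)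
qed

lemma locint_abs_ind: "locint g \<Longrightarrow> integrable lborel (\<lambda>y. \<bar>g y\<bar> * indicator {a..b} y)"
proof -
  assume "locint g"
  then have "integrable lborel (\<lambda>y. \<bar>g y * indicator {a..b} y\<bar>)"
    unfolding locint_def by (intro integrable_abs) auto
  then show ?thesis by (simp add: abs_mult)
qed

lemma Gi_cont:
  assumes g: "locint g"
  shows "isCont (Gi g) x"
proof (rule continuous_at_sequentiallyI)
  fix u assume u: "u \<longlonglongrightarrow> x"
  obtain M where M: "\<And>n. \<bar>u n\<bar> \<le> M"
    using convergent_imp_Bseq[OF convergentI[OF u]] by (auto simp: Bseq_def)
  define M' where "M' = max M \<bar>x\<bar>"
  have gm [measurable]: "g \<in> borel_measurable lborel" using g by (simp add: locint_def)
  have "(\<lambda>n. LINT y|lborel. g y * Kf (u n) y) \<longlonglongrightarrow> (LINT y|lborel. g y * Kf x y)"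
  proof (rule integral_dominated_convergence[where w="\<lambda>y. \<bar>g y\<bar> * indicator {-M'..M'} y"])
    show "(\<lambda>y. g y * Kf x y) \<in> borel_measurable lborel" by measurable
    show "(\<lambda>y. g y * Kf (u n) y) \<in> borel_measurable lborel" for n by measurable
    show "integrable lborel (\<lambda>y. \<bar>g y\<bar> * indicator {- M'..M'} y)" by (rule locint_abs_ind[OF g])
    have "AE y in lborel. y \<noteq> 0" by (rule AE_lborel_singleton)
    moreover have "AE y in lborel. y \<noteq> x" by (rule AE_lborel_singleton)
    ultimately show "AE y in lborel. (\<lambda>n. g y * Kf (u n) y) \<longlonglongrightarrow> g y * Kf x y"
    proof eventually_elim
      case (elim y)
      have "\<forall>\<^sub>F n in sequentially. g y * Kf (u n) y = g y * Kf x y"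
        using Kf_lim[OF elim(1) elim(2) u] by (rule eventually_mono) simp
      then show ?case by (rule tendsto_eventually)
    qed
    show "AE y in lborel. norm (g y * Kf (u n) y) \<le> \<bar>g y\<bar> * indicator {- M'..M'} y" for n
    proof (intro AE_I2)
      fix y
      show "norm (g y * Kf (u n) y) \<le> \<bar>g y\<bar> * indicator {- M'..M'} y"
      proof (cases "Kf (u n) y = 0")
        case True then show ?thesis by (simp add: indicator_def)
      next
        case False
        then have "\<bar>y\<bar> \<le> M'" using Kf_nz[OF False] M[of n] by (simp add: M'_def)
        then have "y \<in> {-M'..M'}" by auto
        then show ?thesis using Kf_bound[of "u n" y]
          by (simp add: abs_mult mult_left_le)
      qed
    qed
  qed
  then show "(\<lambda>n. Gi g (u n)) \<longlonglongrightarrow> Gi g x" by (simp add: Gi_K[OF g])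
qed

lemma Gi_cont_on: "locint g \<Longrightarrow> continuous_on UNIV (Gi g)"
  by (simp add: Gi_cont continuous_at_imp_continuous_on)

lemma integrable_pair_prod:
  fixes a b :: "real \<Rightarrow> real"
  assumes a: "integrable lborel a" and b: "integrable lborel b"
  shows "integrable (lborel \<Otimes>\<^sub>M lborel) (\<lambda>p. a (fst p) * b (snd p))"
  unfolding integrable_iff_bounded
proof
  have am [measurable]: "a \<in> borel_measurable lborel" using a by (rule borel_measurable_integrable)
  have bm [measurable]: "b \<in> borel_measurable lborel" using b by (rule borel_measurable_integrable)
  show "(\<lambda>p. a (fst p) * b (snd p)) \<in> borel_measurable (lborel \<Otimes>\<^sub>M lborel)" by measurable
  have "(\<integral>\<^sup>+p. ennreal (norm (a (fst p) * b (snd p))) \<partial>(lborel \<Otimes>\<^sub>M lborel))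
      = (\<integral>\<^sup>+x. \<integral>\<^sup>+y. ennreal (norm (a (fst (x,y)) * b (snd (x,y)))) \<partial>lborel \<partial>lborel)"
    by (rule sigma_finite_measure.nn_integral_fst[OF sigma_finite_lborel, symmetric]) measurable
  also have "\<dots> = (\<integral>\<^sup>+x. ennreal \<bar>a x\<bar> * (\<integral>\<^sup>+y. ennreal \<bar>b y\<bar> \<partial>lborel) \<partial>lborel)"
    by (intro nn_integral_cong) (simp add: abs_mult ennreal_mult nn_integral_cmult)
  also have "\<dots> = (\<integral>\<^sup>+x. ennreal \<bar>a x\<bar> \<partial>lborel) * (\<integral>\<^sup>+y. ennreal \<bar>b y\<bar> \<partial>lborel)"
    by (rule nn_integral_multc) measurable
  also have "\<dots> < \<infinity>"
    using a b unfolding integrable_iff_bounded by (simp add: ennreal_mult_less_top)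
  finally show "(\<integral>\<^sup>+p. ennreal (norm (a (fst p) * b (snd p))) \<partial>(lborel \<Otimes>\<^sub>M lborel)) < \<infinity>" .
qed

lemma test_deriv_int:
  assumes t: "test_fun \<phi>" and ab: "a \<le> b"
  shows "(LINT x|lborel. indicator {a..b} x *\<^sub>R deriv \<phi> x) = \<phi> b - \<phi> a"
proof -
  have c: "continuous_on UNIV (deriv \<phi>)" by (rule test_fun_cont[OF test_fun_deriv[OF t]])
  have d: "(\<phi> has_real_derivative deriv \<phi> x) (at x)" for x
    using smooth_imp_differentiable[OF test_fun_smooth[OF t]] by (simp add: DERIV_deriv_iff_real_differentiable)
  have "(LBINT x=a..b. deriv \<phi> x) = \<phi> b - \<phi> a"
  proof (rule interval_integral_FTC_finite)
    show "continuous_on {min a b..max a b} (deriv \<phi>)" by (rule continuous_on_subset[OF c]) auto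
    fix x
    show "(\<phi> has_vector_derivative deriv \<phi> x) (at x within {min a b..max a b})"
      using d[of x] by (simp add: has_real_derivative_iff_has_vector_derivative[symmetric] has_field_derivative_at_within)
  qed
  then show ?thesis using ab by (simp add: interval_integral_Icc set_lebesgue_integral_def)
qed

lemma inner_Kf:
  assumes t: "test_fun \<phi>" and y: "y \<noteq> 0"
  shows "(LINT x|lborel. Kf x y * deriv \<phi> x) = - \<phi> y"
proof -
  obtain R where R: "\<And>x. R < \<bar>x\<bar> \<Longrightarrow> \<phi> x = 0" using test_fun_supp[OF t] by blast
  have td: "test_fun (deriv \<phi>)" by (rule test_fun_deriv[OF t])
  obtain R2 where R2: "\<And>x. R2 < \<bar>x\<bar> \<Longrightarrow> deriv \<phi> x = 0" using test_fun_supp[OF td] by blast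
  define b where "b = \<bar>y\<bar> + \<bar>R\<bar> + \<bar>R2\<bar> + 1"
  have bR: "\<phi> b = 0" "\<phi> (-b) = 0" using R[of b] R[of "-b"] by (auto simp: b_def)
  show ?thesis
  proof (cases "0 < y")
    case True
    have "(LINT x|lborel. Kf x y * deriv \<phi> x) = (LINT x|lborel. indicator {y..b} x *\<^sub>R deriv \<phi> x)"
    proof (intro Bochner_Integration.integral_cong refl)
      fix x
      show "Kf x y * deriv \<phi> x = indicator {y..b} x *\<^sub>R deriv \<phi> x"
      proof (cases "b < x")
        case True
        then have "deriv \<phi> x = 0" using R2[of x] by (auto simp: b_def)
        then show ?thesis by simp
      next
        case False
        then show ?thesis using \<open>0 < y\<close> by (auto simp: Kf_def split: split_indicator)
      qed
    qed
    also have "\<dots> = \<phi> b - \<phi> y" by (rule test_deriv_int[OF t]) (simp add: b_def)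
    finally show ?thesis using bR by simp
  next
    case False
    then have yn: "y < 0" using y by auto
    have "(LINT x|lborel. Kf x y * deriv \<phi> x) = (LINT x|lborel. - (indicator {-b..y} x *\<^sub>R deriv \<phi> x))"
    proof (intro Bochner_Integration.integral_cong refl)
      fix x
      show "Kf x y * deriv \<phi> x = - (indicator {-b..y} x *\<^sub>R deriv \<phi> x)"
      proof (cases "x < -b")
        case True
        then have "deriv \<phi> x = 0" using R2[of x] by (auto simp: b_def)
        then show ?thesis by simp
      next
        case False
        then show ?thesis using yn by (auto simp: Kf_def split: split_indicator)
      qed
    qed
    also have "\<dots> = - (\<phi> y - \<phi> (-b))"
      using test_deriv_int[OF t, of "-b" y] by (simp add: b_def)
    finally show ?thesis using bR by simp
  qed
qed

lemma wd_indef: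
  assumes g: "locint g" and t: "test_fun \<phi>"
  shows "(LINT x|lborel. Gi g x * deriv \<phi> x) = - (LINT x|lborel. g x * \<phi> x)"
proof -
  have td: "test_fun (deriv \<phi>)" by (rule test_fun_deriv[OF t])
  obtain R2 where R2: "\<And>x. R2 < \<bar>x\<bar> \<Longrightarrow> deriv \<phi> x = 0" using test_fun_supp[OF td] by blast
  obtain B where B: "\<And>x. \<bar>deriv \<phi> x\<bar> \<le> B"
    using cs_bounded[OF test_fun_cont[OF td] R2] by blast
  define R where "R = \<bar>R2\<bar>"
  have gm [measurable]: "g \<in> borel_measurable lborel" using g by (simp add: locint_def)
  have dm [measurable]: "deriv \<phi> \<in> borel_measurable borel"
    by (rule borel_measurable_continuous_onI[OF test_fun_cont[OF td]])
  define F where "F x y = g y * Kf x y * deriv \<phi> x" for x y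
  have ia: "integrable lborel (\<lambda>x. B * indicator {-R..R} x)"
    by (intro integrable_mult_right integrable_ind_Icc)
  have ib: "integrable lborel (\<lambda>y. \<bar>g y\<bar> * indicator {-R..R} y)" by (rule locint_abs_ind[OF g])
  have int: "integrable (lborel \<Otimes>\<^sub>M lborel) (case_prod F)"
  proof (rule Bochner_Integration.integrable_bound[OF integrable_pair_prod[OF ia ib]])
    show "case_prod F \<in> borel_measurable (lborel \<Otimes>\<^sub>M lborel)"
      unfolding F_def[abs_def] split_beta' by measurable
    show "AE p in lborel \<Otimes>\<^sub>M lborel. norm (case_prod F p) \<le>
        norm (B * indicator {- R..R} (fst p) * (\<bar>g (snd p)\<bar> * indicator {- R..R} (snd p)))"
    proof (intro AE_I2)
      fix p :: "real \<times> real"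
      obtain x y where p: "p = (x, y)" by (cases p)
      have "\<bar>F x y\<bar> \<le> \<bar>B * indicator {- R..R} x * (\<bar>g y\<bar> * indicator {- R..R} y)\<bar>"
      proof (cases "R < \<bar>x\<bar> \<or> Kf x y = 0")
        case True
        then have "F x y = 0"
        proof
          assume "R < \<bar>x\<bar>"
          then have "R2 < \<bar>x\<bar>" by (simp add: R_def)
          then show ?thesis using R2[of x] by (simp add: F_def)
        next
          assume "Kf x y = 0" then show ?thesis by (simp add: F_def)
        qed
        then show ?thesis by simp
      next
        case False
        then have x: "x \<in> {-R..R}" and "\<bar>y\<bar> \<le> \<bar>x\<bar>" using Kf_nz by auto
        then have y: "y \<in> {-R..R}" by auto
        have "\<bar>F x y\<bar> = \<bar>g y\<bar> * \<bar>Kf x y\<bar> * \<bar>deriv \<phi> x\<bar>" by (simp add: F_def abs_mult)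
        also have "\<dots> \<le> \<bar>g y\<bar> * 1 * B"
          by (intro mult_mono Kf_bound B) auto
        also have "\<dots> = \<bar>B * indicator {- R..R} x * (\<bar>g y\<bar> * indicator {- R..R} y)\<bar>"
          using x y B[of 0] by (simp add: abs_mult)
        finally show ?thesis .
      qed
      then show "norm (case_prod F p) \<le>
        norm (B * indicator {- R..R} (fst p) * (\<bar>g (snd p)\<bar> * indicator {- R..R} (snd p)))"
        by (simp add: p)
    qed
  qed
  have "(LINT x|lborel. Gi g x * deriv \<phi> x) = (LINT x|lborel. LINT y|lborel. F x y)"
    by (intro Bochner_Integration.integral_cong refl) (simp add: Gi_K[OF g] F_def)
  also have "\<dots> = (LINT y|lborel. LINT x|lborel. F x y)"
    by (rule lborel_pair.Fubini_integral[OF int, symmetric])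
  also have "\<dots> = (LINT y|lborel. g y * (LINT x|lborel. Kf x y * deriv \<phi> x))"
    by (intro Bochner_Integration.integral_cong refl) (simp add: F_def mult.assoc)
  also have "\<dots> = (LINT y|lborel. - (g y * \<phi> y))"
    by (rule integral_discrete_difference[where X="{0}"]) (auto simp: inner_Kf[OF t])
  also have "\<dots> = - (LINT x|lborel. g x * \<phi> x)" by simp
  finally show ?thesis .
qed

lemma R1:
  assumes f: "locint f" and g: "locint g"
    and w: "\<And>\<phi>. test_fun \<phi> \<Longrightarrow> (LINT x|lborel. f x * deriv \<phi> x) = - (LINT x|lborel. g x * \<phi> x)"
  shows "\<exists>c. AE x in lborel. f x = c + Gi g x"
proof -
  have lG: "locint (Gi g)" by (rule locint_cont[OF Gi_cont_on[OF g]])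
  have "\<exists>c. AE x in lborel. f x - Gi g x = c"
  proof (rule DBR[OF locint_diff[OF f lG]])
    fix \<phi> assume t: "test_fun \<phi>"
    have td: "test_fun (deriv \<phi>)" by (rule test_fun_deriv[OF t])
    have "(LINT x|lborel. (f x - Gi g x) * deriv \<phi> x) = (LINT x|lborel. f x * deriv \<phi> x - Gi g x * deriv \<phi> x)"
      by (simp add: algebra_simps)
    also have "\<dots> = (LINT x|lborel. f x * deriv \<phi> x) - (LINT x|lborel. Gi g x * deriv \<phi> x)"
      by (rule Bochner_Integration.integral_diff[OF locint_test[OF f td] locint_test[OF lG td]])
    also have "\<dots> = 0" using w[OF t] wd_indef[OF g t] by simp
    finally show "(LINT x|lborel. (f x - Gi g x) * deriv \<phi> x) = 0" .
  qed
  then obtain c where "AE x in lborel. f x - Gi g x = c" by blast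
  then have "AE x in lborel. f x = c + Gi g x" by eventually_elim simp
  then show ?thesis by blast
qed


definition wd1 :: "(real \<Rightarrow> real) \<Rightarrow> (real \<Rightarrow> real) \<Rightarrow> bool" where
  "wd1 f g \<longleftrightarrow> (\<forall>\<phi>. test_fun \<phi> \<longrightarrow> (LINT x|lborel. f x * deriv \<phi> x) = - (LINT x|lborel. g x * \<phi> x))"

lemma wd_step:
  assumes a: "weak_deriv j f a" and b: "weak_deriv (Suc j) f b"
  shows "wd1 a b"
  unfolding wd1_def
proof safe
  fix \<phi> assume t: "test_fun \<phi>"
  have e: "(deriv ^^ Suc j) \<phi> = (deriv ^^ j) (deriv \<phi>)" by (simp add: funpow_Suc_right del: funpow.simps)
  have 1: "(LINT x|lborel. f x * (deriv ^^ j) (deriv \<phi>) x) = (-1)^j * (LINT x|lborel. a x * deriv \<phi> x)"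
    using a test_fun_deriv[OF t] unfolding weak_deriv_def by blast
  have 2: "(LINT x|lborel. f x * (deriv ^^ Suc j) \<phi> x) = (-1)^(Suc j) * (LINT x|lborel. b x * \<phi> x)"
    using b t unfolding weak_deriv_def by blast
  from 1 2 e have eq: "(-1)^j * (LINT x|lborel. a x * deriv \<phi> x) = (-1)^j * (- (LINT x|lborel. b x * \<phi> x))"
    by simp
  have nz: "(-1::real)^j \<noteq> 0" by simp
  show "(LINT x|lborel. a x * deriv \<phi> x) = - (LINT x|lborel. b x * \<phi> x)"
    using eq mult_left_cancel[OF nz] by blast
qed

lemma wd1_AE:
  assumes w: "wd1 f g" and gm: "g \<in> borel_measurable lborel" and hm: "h \<in> borel_measurable lborel"
    and ae: "AE x in lborel. g x = h x"
  shows "wd1 f h"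
  unfolding wd1_def
proof safe
  fix \<phi> assume t: "test_fun \<phi>"
  have pm: "\<phi> \<in> borel_measurable borel" by (rule borel_measurable_continuous_onI[OF test_fun_cont[OF t]])
  have "(LINT x|lborel. g x * \<phi> x) = (LINT x|lborel. h x * \<phi> x)"
    by (rule integral_cong_AE) (use gm hm pm ae in \<open>auto elim: eventually_mono\<close>)
  then show "(LINT x|lborel. f x * deriv \<phi> x) = - (LINT x|lborel. h x * \<phi> x)"
    using w t unfolding wd1_def by simp
qed

lemma FTC_Gi:
  fixes f :: "real \<Rightarrow> real"
  assumes "continuous_on UNIV f"
  shows "(Gi f has_real_derivative f x) (at x)"
  unfolding Gi_def[abs_def] using FTC_cont[OF assms, of 0 x] by (simp add: zero_ereal_def)

lemma chain:
  fixes g :: "nat \<Rightarrow> real \<Rightarrow> real"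
  assumes l: "\<And>j. j \<le> Suc m \<Longrightarrow> locint (g j)"
    and w: "\<And>j. j < Suc m \<Longrightarrow> wd1 (g j) (g (Suc j))"
    and gm: "\<And>j. j \<le> Suc m \<Longrightarrow> g j \<in> borel_measurable lborel"
  shows "\<exists>H. (\<forall>j<Suc m. continuous_on UNIV (H j)) \<and> (\<forall>j<Suc m. AE x in lborel. H j x = g j x) \<and>
     (\<forall>j. Suc j < Suc m \<longrightarrow> (\<forall>x. (H j has_real_derivative H (Suc j) x) (at x))) \<and>
     (\<exists>c. \<forall>x. H m x = c + Gi (g (Suc m)) x)"
  using assms
proof (induction m arbitrary: g)
  case 0
  have w: "wd1 (g 0) (g (Suc 0))" using "0.prems"(2)[of 0] by simp
  have l0: "locint (g 0)" using "0.prems"(1)[of 0] by simp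
  have l1: "locint (g (Suc 0))" using "0.prems"(1)[of "Suc 0"] by simp
  obtain c where c: "AE x in lborel. g 0 x = c + Gi (g 1) x"
    using R1[OF l0 l1 w[unfolded wd1_def, rule_format]] by auto
  define H :: "nat \<Rightarrow> real \<Rightarrow> real" where "H = (\<lambda>_ x. c + Gi (g 1) x)"
  have "continuous_on UNIV (H 0)"
    unfolding H_def by (intro continuous_on_add continuous_on_const Gi_cont_on "0.prems"(1)) simp
  moreover have "AE x in lborel. H 0 x = g 0 x" using c by (simp add: H_def eq_commute)
  ultimately show ?case by (intro exI[of _ H]) (auto simp: H_def)
next
  case (Suc m)
  define g' where "g' j = g (Suc j)" for j
  have "\<exists>H. (\<forall>j<Suc m. continuous_on UNIV (H j)) \<and> (\<forall>j<Suc m. AE x in lborel. H j x = g' j x) \<and>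
     (\<forall>j. Suc j < Suc m \<longrightarrow> (\<forall>x. (H j has_real_derivative H (Suc j) x) (at x))) \<and>
     (\<exists>c. \<forall>x. H m x = c + Gi (g' (Suc m)) x)"
  proof (rule Suc.IH)
    fix j assume "j \<le> Suc m" then show "locint (g' j)" unfolding g'_def using Suc.prems(1)[of "Suc j"] by simp
  next
    fix j assume "j < Suc m" then show "wd1 (g' j) (g' (Suc j))" unfolding g'_def using Suc.prems(2)[of "Suc j"] by simp
  next
    fix j assume "j \<le> Suc m" then show "g' j \<in> borel_measurable lborel" unfolding g'_def using Suc.prems(3)[of "Suc j"] by simp
  qed
  then obtain H' where H'1: "\<And>j. j < Suc m \<Longrightarrow> continuous_on UNIV (H' j)"
    and H'2: "\<And>j. j < Suc m \<Longrightarrow> AE x in lborel. H' j x = g' j x"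
    and H'3: "\<And>j x. Suc j < Suc m \<Longrightarrow> (H' j has_real_derivative H' (Suc j) x) (at x)"
    and H'4: "\<exists>c. \<forall>x. H' m x = c + Gi (g' (Suc m)) x" by blast
  have c0: "continuous_on UNIV (H' 0)" using H'1 by simp
  have w01: "wd1 (g 0) (g (Suc 0))" using Suc.prems(2)[of 0] by simp
  have w0: "wd1 (g 0) (H' 0)"
  proof (rule wd1_AE[OF w01])
    show "g (Suc 0) \<in> borel_measurable lborel" using Suc.prems(3)[of "Suc 0"] by simp
    show "H' 0 \<in> borel_measurable lborel" using borel_measurable_continuous_onI[OF c0] by simp
    show "AE x in lborel. g (Suc 0) x = H' 0 x" using H'2[of 0]
    proof (rule eventually_mono)
      fix x assume "H' 0 x = g' 0 x" then show "g (Suc 0) x = H' 0 x" by (simp add: g'_def)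
    qed simp
  qed
  have l0: "locint (g 0)" using Suc.prems(1)[of 0] by simp
  obtain c where c: "AE x in lborel. g 0 x = c + Gi (H' 0) x"
    using R1[OF l0 locint_cont[OF c0] w0[unfolded wd1_def, rule_format]] by blast
  define H :: "nat \<Rightarrow> real \<Rightarrow> real" where "H j = (case j of 0 \<Rightarrow> (\<lambda>x. c + Gi (H' 0) x) | Suc i \<Rightarrow> H' i)" for j
  have "\<forall>j<Suc (Suc m). continuous_on UNIV (H j)"
  proof safe
    fix j assume "j < Suc (Suc m)"
    show "continuous_on UNIV (H j)"
    proof (cases j)
      case 0
      have "continuous_on UNIV (\<lambda>x. c + Gi (H' 0) x)"
        by (intro continuous_on_add continuous_on_const Gi_cont_on locint_cont[OF c0])
      then show ?thesis using 0 by (simp add: H_def)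
    next
      case (Suc i)
      then show ?thesis using H'1[of i] \<open>j < Suc (Suc m)\<close> by (simp add: H_def)
    qed
  qed
  moreover have "\<forall>j<Suc (Suc m). AE x in lborel. H j x = g j x"
  proof safe
    fix j assume "j < Suc (Suc m)"
    then show "AE x in lborel. H j x = g j x"
    proof (cases j)
      case 0
      from c show ?thesis
      proof (rule eventually_mono)
        fix x assume "g 0 x = c + Gi (H' 0) x" then show "H j x = g j x" using 0 by (simp add: H_def)
      qed
    next
      case (Suc i)
      have "AE x in lborel. H' i x = g' i x" using H'2[of i] \<open>j < Suc (Suc m)\<close> Suc by simp
      then show ?thesis
      proof (rule eventually_mono)
        fix x assume "H' i x = g' i x" then show "H j x = g j x" using Suc by (simp add: H_def g'_def)
      qed
    qed
  qed
  moreover have "\<forall>j. Suc j < Suc (Suc m) \<longrightarrow> (\<forall>x. (H j has_real_derivative H (Suc j) x) (at x))"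
  proof (intro allI impI)
    fix j x assume j: "Suc j < Suc (Suc m)"
    show "(H j has_real_derivative H (Suc j) x) (at x)"
    proof (cases j)
      case 0
      have "((\<lambda>x. c + Gi (H' 0) x) has_real_derivative 0 + H' 0 x) (at x)"
        by (intro DERIV_add DERIV_const FTC_Gi[OF c0])
      then show ?thesis using 0 by (simp add: H_def)
    next
      case (Suc i) then show ?thesis using H'3[of i x] j by (simp add: H_def)
    qed
  qed
  moreover have "\<exists>c. \<forall>x. H (Suc m) x = c + Gi (g (Suc (Suc m))) x"
    using H'4 by (simp add: H_def g'_def)
  ultimately show ?case by blast
qed


definition gsel :: "nat \<Rightarrow> (real \<Rightarrow> real) \<Rightarrow> real \<Rightarrow> real" where
  "gsel j f = (SOME g. sq_int g \<and> weak_deriv j f g)"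

lemma gsel: "Hk k f \<Longrightarrow> j \<le> k \<Longrightarrow> sq_int (gsel j f) \<and> weak_deriv j f (gsel j f)"
  unfolding Hk_def gsel_def by (metis (mono_tags, lifting) someI_ex)

lemma Hk_norm_gsel: "Hk_norm k f = sqrt (\<Sum>j\<le>k. LINT x|lborel. (gsel j f x)\<^sup>2)"
  by (simp add: Hk_norm_def gsel_def)

lemma Hk_norm_ge:
  assumes "j \<le> k"
  shows "(LINT x|lborel. (gsel j f x)\<^sup>2) \<le> (Hk_norm k f)\<^sup>2"
proof -
  have nn: "\<And>i. 0 \<le> (LINT x|lborel. (gsel i f x)\<^sup>2)" by (intro integral_nonneg_AE) auto
  have "(LINT x|lborel. (gsel j f x)\<^sup>2) \<le> (\<Sum>i\<le>k. LINT x|lborel. (gsel i f x)\<^sup>2)"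
    using assms by (intro member_le_sum nn) auto
  also have "\<dots> = (Hk_norm k f)\<^sup>2"
    unfolding Hk_norm_gsel by (rule real_sqrt_pow2[symmetric]) (intro sum_nonneg nn)
  finally show ?thesis .
qed

lemma Hk_norm_nonneg: "0 \<le> Hk_norm k f"
  unfolding Hk_norm_gsel by (intro real_sqrt_ge_zero sum_nonneg integral_nonneg_AE) auto

lemma sq_int_meas: "sq_int f \<Longrightarrow> f \<in> borel_measurable lborel"
  by (simp add: sq_int_def)

lemma wd0:
  assumes f: "sq_int f" and g: "sq_int g" and w: "weak_deriv 0 f g"
  shows "AE x in lborel. f x = g x"
proof -
  have "AE x in lborel. f x - g x = 0"
  proof (rule FL[OF locint_diff[OF sq_int_locint[OF f] sq_int_locint[OF g]]])
    fix \<phi> assume t: "test_fun \<phi>"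
    have i1: "integrable lborel (\<lambda>x. f x * \<phi> x)" and i2: "integrable lborel (\<lambda>x. g x * \<phi> x)"
      and e: "(LINT x|lborel. f x * \<phi> x) = (LINT x|lborel. g x * \<phi> x)"
      using w t unfolding weak_deriv_def by auto
    have "(LINT x|lborel. (f x - g x) * \<phi> x) = (LINT x|lborel. f x * \<phi> x - g x * \<phi> x)"
      by (simp add: algebra_simps)
    also have "\<dots> = 0" using i1 i2 e by simp
    finally show "(LINT x|lborel. (f x - g x) * \<phi> x) = 0" .
  qed
  then show ?thesis by (rule eventually_mono) simp
qed

lemma reg:
  assumes h: "Hk (Suc m) f"
  shows "\<exists>H. (\<forall>j<Suc m. continuous_on UNIV (H j)) \<and> (\<forall>j<Suc m. AE x in lborel. H j x = gsel j f x) \<and>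
     (\<forall>j. Suc j < Suc m \<longrightarrow> (\<forall>x. (H j has_real_derivative H (Suc j) x) (at x))) \<and>
     (\<exists>c. \<forall>x. H m x = c + Gi (gsel (Suc m) f) x)"
proof (rule chain)
  fix j assume "j \<le> Suc m"
  then show "locint (gsel j f)" using gsel[OF h] sq_int_locint by blast
next
  fix j assume "j \<le> Suc m"
  then show "gsel j f \<in> borel_measurable lborel" using gsel[OF h] sq_int_meas by blast
next
  fix j assume "j < Suc m"
  then show "wd1 (gsel j f) (gsel (Suc j) f)"
    using gsel[OF h, of j] gsel[OF h, of "Suc j"] wd_step by auto
qed

lemma Gi_0: "Gi g 0 = 0"
  by (simp add: Gi_def)

lemma FTC_Gi_inv:
  fixes F G :: "real \<Rightarrow> real"
  assumes c: "continuous_on UNIV G" and d: "\<And>x. (F has_real_derivative G x) (at x)"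
  shows "F x = F 0 + Gi G x"
proof -
  have "\<And>x. ((\<lambda>x. F x - Gi G x) has_real_derivative G x - G x) (at x)"
    by (intro DERIV_diff d FTC_Gi c)
  then have "\<forall>x. ((\<lambda>x. F x - Gi G x) has_real_derivative 0) (at x)" by simp
  from DERIV_isconst_all[OF this] have "F x - Gi G x = F 0 - Gi G 0" .
  then show ?thesis by (simp add: Gi_0)
qed

lemma integrable_Kf: "locint g \<Longrightarrow> integrable lborel (\<lambda>z. g z * Kf x z)"
proof -
  assume g: "locint g"
  have "integrable lborel (\<lambda>z. \<bar>g z\<bar> * indicator {-\<bar>x\<bar>..\<bar>x\<bar>} z)" by (rule locint_abs_ind[OF g])
  then show ?thesis
  proof (rule Bochner_Integration.integrable_bound)
    show "(\<lambda>z. g z * Kf x z) \<in> borel_measurable lborel"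
      using g Kf_meas[of x] unfolding locint_def by (auto intro: borel_measurable_times)
    show "AE z in lborel. norm (g z * Kf x z) \<le> norm (\<bar>g z\<bar> * indicator {- \<bar>x\<bar>..\<bar>x\<bar>} z)"
    proof (intro AE_I2)
      fix z
      show "norm (g z * Kf x z) \<le> norm (\<bar>g z\<bar> * indicator {- \<bar>x\<bar>..\<bar>x\<bar>} z)"
      proof (cases "Kf x z = 0")
        case True then show ?thesis by simp
      next
        case False
        then have "z \<in> {-\<bar>x\<bar>..\<bar>x\<bar>}" using Kf_nz[OF False] by auto
        then show ?thesis using Kf_bound[of x z] by (simp add: abs_mult mult_left_le)
      qed
    qed
  qed
qed

lemma Gi_diff_bound:
  assumes g: "locint g" and xy: "x \<le> y"
  shows "\<bar>Gi g y - Gi g x\<bar> \<le> (LINT z|lborel. \<bar>g z\<bar> * indicator {x..y} z)"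
proof -
  have "Gi g y - Gi g x = (LINT z|lborel. g z * Kf y z - g z * Kf x z)"
    unfolding Gi_K[OF g] by (rule Bochner_Integration.integral_diff[symmetric, OF integrable_Kf[OF g] integrable_Kf[OF g]])
  also have "\<bar>\<dots>\<bar> \<le> (LINT z|lborel. \<bar>g z * Kf y z - g z * Kf x z\<bar>)"
    by (rule integral_abs_bound)
  also have "\<dots> \<le> (LINT z|lborel. \<bar>g z\<bar> * indicator {x..y} z)"
  proof (rule integral_mono_AE)
    show "integrable lborel (\<lambda>z. \<bar>g z * Kf y z - g z * Kf x z\<bar>)"
      by (intro integrable_abs Bochner_Integration.integrable_diff integrable_Kf[OF g])
    show "integrable lborel (\<lambda>z. \<bar>g z\<bar> * indicator {x..y} z)" by (rule locint_abs_ind[OF g])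
    show "AE z in lborel. \<bar>g z * Kf y z - g z * Kf x z\<bar> \<le> \<bar>g z\<bar> * indicator {x..y} z"
      using AE_lborel_singleton[of 0]
    proof (rule eventually_mono)
      fix z :: real assume z: "z \<noteq> 0"
      have "\<bar>Kf y z - Kf x z\<bar> \<le> indicator {x..y} z"
        using z xy by (auto simp: Kf_def split: split_indicator)
      then have "\<bar>g z\<bar> * \<bar>Kf y z - Kf x z\<bar> \<le> \<bar>g z\<bar> * indicator {x..y} z"
        by (intro mult_left_mono) auto
      then show "\<bar>g z * Kf y z - g z * Kf x z\<bar> \<le> \<bar>g z\<bar> * indicator {x..y} z"
        by (simp add: abs_mult right_diff_distrib[symmetric])
    qed
  qed
  finally show ?thesis .
qed

lemma amgm_abs: "0 < l \<Longrightarrow> \<bar>a::real\<bar> \<le> l / 2 + a\<^sup>2 / (2 * l)"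
proof -
  assume l: "0 < l"
  have "0 \<le> (\<bar>a\<bar> - l)\<^sup>2" by simp
  then have "2 * l * \<bar>a\<bar> \<le> l\<^sup>2 + a\<^sup>2" by (simp add: power2_eq_square algebra_simps abs_mult_self_eq)
  then show ?thesis using l by (simp add: field_simps power2_eq_square)
qed

lemma abs_int_bound:
  assumes F: "sq_int F" and l: "0 < l"
  shows "(LINT y|lborel. \<bar>F y\<bar> * indicator {a..a+1} y) \<le> l / 2 + (LINT y|lborel. (F y)\<^sup>2) / (2 * l)"
proof -
  have i2: "integrable lborel (\<lambda>y. (F y)\<^sup>2)" using F by (simp add: sq_int_def)
  have "(LINT y|lborel. \<bar>F y\<bar> * indicator {a..a+1} y) \<le> (LINT y|lborel. l / 2 * indicator {a..a+1} y + (F y)\<^sup>2 / (2 * l))"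
  proof (rule integral_mono)
    show "integrable lborel (\<lambda>y. \<bar>F y\<bar> * indicator {a..a + 1} y)" by (rule locint_abs_ind[OF sq_int_locint[OF F]])
    show "integrable lborel (\<lambda>y. l / 2 * indicator {a..a + 1} y + (F y)\<^sup>2 / (2 * l))"
      by (intro Bochner_Integration.integrable_add integrable_mult_right integrable_ind_Icc integrable_divide i2)
    fix y
    show "\<bar>F y\<bar> * indicator {a..a + 1} y \<le> l / 2 * indicator {a..a + 1} y + (F y)\<^sup>2 / (2 * l)"
      using amgm_abs[OF l, of "F y"] l by (auto split: split_indicator)
  qed
  also have "\<dots> = l / 2 + (LINT y|lborel. (F y)\<^sup>2) / (2 * l)"
    using i2 by (simp add: Bochner_Integration.integral_add integrable_mult_right)
  finally show ?thesis .
qed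

lemma sup_bound:
  assumes F: "sq_int F" and G: "sq_int G" and rel: "\<And>x. F x = c + Gi G x" and l: "0 < l"
  shows "\<bar>F x\<bar> \<le> l + ((LINT z|lborel. (F z)\<^sup>2) + (LINT z|lborel. (G z)\<^sup>2)) / l"
proof -
  define C where "C = (LINT z|lborel. \<bar>G z\<bar> * indicator {x..x+1} z)"
  have lG: "locint G" by (rule sq_int_locint[OF G])
  have pt: "\<bar>F x\<bar> \<le> \<bar>F y\<bar> + C" if y: "y \<in> {x..x+1}" for y
  proof -
    have "\<bar>Gi G y - Gi G x\<bar> \<le> (LINT z|lborel. \<bar>G z\<bar> * indicator {x..y} z)"
      using y by (intro Gi_diff_bound[OF lG]) auto
    also have "\<dots> \<le> C" unfolding C_def
    proof (rule integral_mono)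
      show "integrable lborel (\<lambda>z. \<bar>G z\<bar> * indicator {x..y} z)" by (rule locint_abs_ind[OF lG])
      show "integrable lborel (\<lambda>z. \<bar>G z\<bar> * indicator {x..x + 1} z)" by (rule locint_abs_ind[OF lG])
      fix z show "\<bar>G z\<bar> * indicator {x..y} z \<le> \<bar>G z\<bar> * indicator {x..x + 1} z"
        using y by (auto split: split_indicator)
    qed
    finally have "\<bar>Gi G y - Gi G x\<bar> \<le> C" .
    moreover have "F x = F y - (Gi G y - Gi G x)" using rel[of x] rel[of y] by simp
    ultimately show ?thesis by linarith
  qed
  have "\<bar>F x\<bar> = (LINT y|lborel. \<bar>F x\<bar> * indicator {x..x+1} y)" by simp
  also have "\<dots> \<le> (LINT y|lborel. \<bar>F y\<bar> * indicator {x..x+1} y + C * indicator {x..x+1} y)"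
  proof (rule integral_mono)
    show "integrable lborel (\<lambda>y. \<bar>F x\<bar> * indicator {x..x + 1} y)" by (intro integrable_mult_right integrable_ind_Icc)
    show "integrable lborel (\<lambda>y. \<bar>F y\<bar> * indicator {x..x + 1} y + C * indicator {x..x + 1} y)"
      by (intro Bochner_Integration.integrable_add integrable_mult_right integrable_ind_Icc
          locint_abs_ind sq_int_locint F)
    fix y show "\<bar>F x\<bar> * indicator {x..x + 1} y \<le> \<bar>F y\<bar> * indicator {x..x + 1} y + C * indicator {x..x + 1} y"
      using pt[of y] by (auto split: split_indicator)
  qed
  also have "\<dots> = (LINT y|lborel. \<bar>F y\<bar> * indicator {x..x+1} y) + C"
    by (subst Bochner_Integration.integral_add) (auto intro!: integrable_mult_right locint_abs_ind sq_int_locint F)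
  also have "\<dots> \<le> (l / 2 + (LINT y|lborel. (F y)\<^sup>2) / (2 * l)) + (l / 2 + (LINT y|lborel. (G y)\<^sup>2) / (2 * l))"
    unfolding C_def by (intro add_mono abs_int_bound F G l)
  also have "\<dots> \<le> l + ((LINT z|lborel. (F z)\<^sup>2) + (LINT z|lborel. (G z)\<^sup>2)) / l"
  proof -
    have a: "0 \<le> (LINT z|lborel. (F z)\<^sup>2)" "0 \<le> (LINT z|lborel. (G z)\<^sup>2)"
      by (auto intro!: integral_nonneg_AE)
    have "((LINT z|lborel. (F z)\<^sup>2) + (LINT z|lborel. (G z)\<^sup>2)) / (2 * l) \<le> ((LINT z|lborel. (F z)\<^sup>2) + (LINT z|lborel. (G z)\<^sup>2)) / l"
      using a l by (intro divide_left_mono) auto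
    then show ?thesis by (simp add: add_divide_distrib)
  qed
  finally show ?thesis .
qed


lemma sq_int_AE:
  assumes g: "sq_int g" and h: "h \<in> borel_measurable lborel" and ae: "AE x in lborel. g x = h x"
  shows "sq_int h" "(LINT x|lborel. (h x)\<^sup>2) = (LINT x|lborel. (g x)\<^sup>2)"
proof -
  have gm: "g \<in> borel_measurable lborel" using g by (simp add: sq_int_def)
  have ae2: "AE x in lborel. (g x)\<^sup>2 = (h x)\<^sup>2" using ae by (rule eventually_mono) simp
  have "integrable lborel (\<lambda>x. (g x)\<^sup>2) = integrable lborel (\<lambda>x. (h x)\<^sup>2)"
    by (rule integrable_cong_AE) (use gm h ae2 in auto)
  then show "sq_int h" using g h by (simp add: sq_int_def)
  show "(LINT x|lborel. (h x)\<^sup>2) = (LINT x|lborel. (g x)\<^sup>2)"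
    by (rule integral_cong_AE) (use gm h ae2 in \<open>auto elim: eventually_mono\<close>)
qed

lemma test_derivs_cont: "test_fun \<phi> \<Longrightarrow> continuous_on UNIV ((deriv ^^ j) \<phi>)"
  unfolding test_fun_def
  by (meson continuous_at_imp_continuous_on differentiable_imp_continuous_within)

lemma weak_deriv_AE:
  assumes f: "f \<in> borel_measurable lborel" and f': "f' \<in> borel_measurable lborel"
    and ae: "AE x in lborel. f x = f' x"
  shows "weak_deriv j f g = weak_deriv j f' g"
proof -
  have "integrable lborel (\<lambda>x. f x * (deriv ^^ j) \<phi> x) = integrable lborel (\<lambda>x. f' x * (deriv ^^ j) \<phi> x)
      \<and> (LINT x|lborel. f x * (deriv ^^ j) \<phi> x) = (LINT x|lborel. f' x * (deriv ^^ j) \<phi> x)"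
    if t: "test_fun \<phi>" for \<phi>
  proof -
    have dm: "(deriv ^^ j) \<phi> \<in> borel_measurable borel"
      by (rule borel_measurable_continuous_onI[OF test_derivs_cont[OF t]])
    have m1: "(\<lambda>x. f x * (deriv ^^ j) \<phi> x) \<in> borel_measurable lborel"
      using f dm by (auto intro: borel_measurable_times)
    have m2: "(\<lambda>x. f' x * (deriv ^^ j) \<phi> x) \<in> borel_measurable lborel"
      using f' dm by (auto intro: borel_measurable_times)
    have ae2: "AE x in lborel. f x * (deriv ^^ j) \<phi> x = f' x * (deriv ^^ j) \<phi> x"
      using ae by (rule eventually_mono) simp
    show ?thesis
      using integrable_cong_AE[OF m1 m2 ae2] integral_cong_AE[OF m1 m2 ae2] by simp
  qed
  then show ?thesis unfolding weak_deriv_def by auto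
qed

lemma Hk_AE:
  assumes h: "Hk k f" and f': "f' \<in> borel_measurable lborel" and ae: "AE x in lborel. f x = f' x"
  shows "Hk k f'" "Hk_norm k f' = Hk_norm k f"
proof -
  have sf: "sq_int f" using h by (simp add: Hk_def)
  have fm: "f \<in> borel_measurable lborel" using sf by (simp add: sq_int_def)
  have e: "\<And>j g. weak_deriv j f g = weak_deriv j f' g" by (rule weak_deriv_AE[OF fm f' ae])
  show "Hk k f'" using h sq_int_AE(1)[OF sf f' ae] unfolding Hk_def e by simp
  show "Hk_norm k f' = Hk_norm k f" unfolding Hk_norm_def e ..
qed

lemma sq_int_lin:
  assumes f: "sq_int f" and g: "sq_int g"
  shows "sq_int (\<lambda>x. a * f x + b * g x)"
proof -
  have fm: "f \<in> borel_measurable lborel" and gm: "g \<in> borel_measurable lborel"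
    and fi: "integrable lborel (\<lambda>x. (f x)\<^sup>2)" and gi: "integrable lborel (\<lambda>x. (g x)\<^sup>2)"
    using f g by (auto simp: sq_int_def)
  have "integrable lborel (\<lambda>x. 2 * a\<^sup>2 * (f x)\<^sup>2 + 2 * b\<^sup>2 * (g x)\<^sup>2)"
    by (intro Bochner_Integration.integrable_add integrable_mult_right fi gi)
  then have "integrable lborel (\<lambda>x. (a * f x + b * g x)\<^sup>2)"
  proof (rule Bochner_Integration.integrable_bound)
    show "(\<lambda>x. (a * f x + b * g x)\<^sup>2) \<in> borel_measurable lborel" using fm gm by measurable
    show "AE x in lborel. norm ((a * f x + b * g x)\<^sup>2) \<le> norm (2 * a\<^sup>2 * (f x)\<^sup>2 + 2 * b\<^sup>2 * (g x)\<^sup>2)"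
    proof (intro AE_I2)
      fix x
      have "0 \<le> (a * f x - b * g x)\<^sup>2" by simp
      then have "(a * f x + b * g x)\<^sup>2 \<le> 2 * a\<^sup>2 * (f x)\<^sup>2 + 2 * b\<^sup>2 * (g x)\<^sup>2"
        by (simp add: power2_eq_square algebra_simps)
      moreover have "0 \<le> 2 * a\<^sup>2 * (f x)\<^sup>2 + 2 * b\<^sup>2 * (g x)\<^sup>2" by simp
      ultimately show "norm ((a * f x + b * g x)\<^sup>2) \<le> norm (2 * a\<^sup>2 * (f x)\<^sup>2 + 2 * b\<^sup>2 * (g x)\<^sup>2)"
        by simp
    qed
  qed
  moreover have "(\<lambda>x. a * f x + b * g x) \<in> borel_measurable lborel" using fm gm by measurable
  ultimately show ?thesis unfolding sq_int_def by simp
qed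

lemma weak_deriv_lin:
  assumes p: "weak_deriv j f p" and q: "weak_deriv j g q"
  shows "weak_deriv j (\<lambda>x. a * f x + b * g x) (\<lambda>x. a * p x + b * q x)"
  unfolding weak_deriv_def
proof (intro allI impI conjI)
  fix \<phi> assume t: "test_fun \<phi>"
  have i1: "integrable lborel (\<lambda>x. f x * (deriv ^^ j) \<phi> x)" and i2: "integrable lborel (\<lambda>x. p x * \<phi> x)"
    and e1: "(LINT x|lborel. f x * (deriv ^^ j) \<phi> x) = (-1)^j * (LINT x|lborel. p x * \<phi> x)"
    using p t unfolding weak_deriv_def by auto
  have i3: "integrable lborel (\<lambda>x. g x * (deriv ^^ j) \<phi> x)" and i4: "integrable lborel (\<lambda>x. q x * \<phi> x)"
    and e2: "(LINT x|lborel. g x * (deriv ^^ j) \<phi> x) = (-1)^j * (LINT x|lborel. q x * \<phi> x)"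
    using q t unfolding weak_deriv_def by auto
  have r1: "(\<lambda>x. (a * f x + b * g x) * (deriv ^^ j) \<phi> x) = (\<lambda>x. a * (f x * (deriv ^^ j) \<phi> x) + b * (g x * (deriv ^^ j) \<phi> x))"
    by (rule ext) (simp add: algebra_simps)
  have r2: "(\<lambda>x. (a * p x + b * q x) * \<phi> x) = (\<lambda>x. a * (p x * \<phi> x) + b * (q x * \<phi> x))"
    by (rule ext) (simp add: algebra_simps)
  show "integrable lborel (\<lambda>x. (a * f x + b * g x) * (deriv ^^ j) \<phi> x)"
    unfolding r1 by (intro Bochner_Integration.integrable_add integrable_mult_right i1 i3)
  show "integrable lborel (\<lambda>x. (a * p x + b * q x) * \<phi> x)"
    unfolding r2 by (intro Bochner_Integration.integrable_add integrable_mult_right i2 i4)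
  show "(LINT x|lborel. (a * f x + b * g x) * (deriv ^^ j) \<phi> x) = (-1)^j * (LINT x|lborel. (a * p x + b * q x) * \<phi> x)"
    unfolding r1 r2 using i1 i2 i3 i4 e1 e2
    by (simp add: Bochner_Integration.integral_add integrable_mult_right algebra_simps)
qed

lemma Hk_lin:
  assumes f: "Hk k f" and g: "Hk k g"
  shows "Hk k (\<lambda>x. a * f x + b * g x)"
  unfolding Hk_def
proof (intro conjI allI impI)
  show "sq_int (\<lambda>x. a * f x + b * g x)" using f g by (intro sq_int_lin) (auto simp: Hk_def)
  fix j assume j: "j \<le> k"
  obtain p where p: "sq_int p" "weak_deriv j f p" using f j unfolding Hk_def by blast
  obtain q where q: "sq_int q" "weak_deriv j g q" using g j unfolding Hk_def by blast
  show "\<exists>r. sq_int r \<and> weak_deriv j (\<lambda>x. a * f x + b * g x) r"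
    using sq_int_lin[OF p(1) q(1)] weak_deriv_lin[OF p(2) q(2)] by blast
qed

lemma reg_rep:
  assumes h: "Hk (Suc m) f"
  shows "\<exists>F. continuous_on UNIV F \<and> (AE x in lborel. f x = F x)"
proof -
  obtain H where H1: "\<forall>j<Suc m. continuous_on UNIV (H j)" and H2: "\<forall>j<Suc m. AE x in lborel. H j x = gsel j f x"
    using reg[OF h] by blast
  have sf: "sq_int f" using h by (simp add: Hk_def)
  have "AE x in lborel. f x = gsel 0 f x" using wd0[OF sf] gsel[OF h, of 0] by simp
  moreover have "AE x in lborel. H 0 x = gsel 0 f x" using H2 by simp
  ultimately have "AE x in lborel. f x = H 0 x" by eventually_elim simp
  then show ?thesis using H1 by auto
qed

lemma bound_arith:
  assumes "A \<le> N" "B \<le> N" "0 < (l::real)"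
  shows "l + (A + B) / l \<le> l + 2 * N / l"
  using assms by (intro add_left_mono divide_right_mono) auto

lemma reg_cont:
  assumes h: "Hk (Suc m) f" and c: "continuous_on UNIV f"
  shows "\<forall>j<Suc m. continuous_on UNIV ((deriv ^^ j) f)"
    and "\<forall>j. Suc j < Suc m \<longrightarrow> (\<forall>x. ((deriv ^^ j) f has_real_derivative (deriv ^^ (Suc j)) f x) (at x))"
    and "\<forall>j<Suc m. \<forall>x l. 0 < l \<longrightarrow> \<bar>(deriv ^^ j) f x\<bar> \<le> l + 2 * (Hk_norm (Suc m) f)\<^sup>2 / l"
proof -
  obtain H where H1: "\<forall>j<Suc m. continuous_on UNIV (H j)" and H2: "\<forall>j<Suc m. AE x in lborel. H j x = gsel j f x"
    and H3: "\<forall>j. Suc j < Suc m \<longrightarrow> (\<forall>x. (H j has_real_derivative H (Suc j) x) (at x))"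
    and H4: "\<exists>c. \<forall>x. H m x = c + Gi (gsel (Suc m) f) x"
    using reg[OF h] by blast
  have sf: "sq_int f" using h by (simp add: Hk_def)
  have "AE x in lborel. f x = gsel 0 f x" using wd0[OF sf] gsel[OF h, of 0] by simp
  moreover have "AE x in lborel. H 0 x = gsel 0 f x" using H2 by simp
  ultimately have "AE x in lborel. H 0 x = f x" by eventually_elim simp
  then have H0: "H 0 = f" using cont_AE_eq H1 c by blast
  have Hj: "j < Suc m \<Longrightarrow> H j = (deriv ^^ j) f" for j
  proof (induction j)
    case 0 then show ?case using H0 by simp
  next
    case (Suc j)
    then have "H j = (deriv ^^ j) f" by simp
    moreover have "deriv (H j) = H (Suc j)" using H3 Suc.prems by (auto intro!: ext DERIV_imp_deriv)
    ultimately show ?case by simp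
  qed
  show "\<forall>j<Suc m. continuous_on UNIV ((deriv ^^ j) f)" using H1 Hj by simp
  show "\<forall>j. Suc j < Suc m \<longrightarrow> (\<forall>x. ((deriv ^^ j) f has_real_derivative (deriv ^^ (Suc j)) f x) (at x))"
    using H3 Hj by (metis Suc_lessD)
  show "\<forall>j<Suc m. \<forall>x l. 0 < l \<longrightarrow> \<bar>(deriv ^^ j) f x\<bar> \<le> l + 2 * (Hk_norm (Suc m) f)\<^sup>2 / l"
  proof (intro allI impI)
    fix j x l assume j: "j < Suc m" and l: "0 < (l::real)"
    have Hm: "H i \<in> borel_measurable lborel" if "i < Suc m" for i
      using borel_measurable_continuous_onI[of "H i"] H1 that by simp
    have sH: "sq_int (H i)" "(LINT x|lborel. (H i x)\<^sup>2) \<le> (Hk_norm (Suc m) f)\<^sup>2" if i: "i < Suc m" for i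
    proof -
      have ae: "AE x in lborel. gsel i f x = H i x" using H2 i by (auto elim: eventually_mono)
      have gs: "sq_int (gsel i f)" using gsel[OF h, of i] i by simp
      show "sq_int (H i)" by (rule sq_int_AE(1)[OF gs Hm[OF i] ae])
      show "(LINT x|lborel. (H i x)\<^sup>2) \<le> (Hk_norm (Suc m) f)\<^sup>2"
        using sq_int_AE(2)[OF gs Hm[OF i] ae] Hk_norm_ge[of i "Suc m" f] i by simp
    qed
    have "\<bar>H j x\<bar> \<le> l + 2 * (Hk_norm (Suc m) f)\<^sup>2 / l"
    proof (cases "Suc j < Suc m")
      case True
      have rel: "\<And>x. H j x = H j 0 + Gi (H (Suc j)) x"
        using H1 H3 True by (intro FTC_Gi_inv) auto
      have "\<bar>H j x\<bar> \<le> l + ((LINT z|lborel. (H j z)\<^sup>2) + (LINT z|lborel. (H (Suc j) z)\<^sup>2)) / l"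
        by (rule sup_bound[OF sH(1)[OF j] sH(1)[OF True] rel l])
      also have "\<dots> \<le> l + 2 * (Hk_norm (Suc m) f)\<^sup>2 / l"
        by (rule bound_arith[OF sH(2)[OF j] sH(2)[OF True] l])
      finally show ?thesis .
    next
      case False
      then have jm: "j = m" using j by simp
      obtain c0 where rel: "\<And>x. H m x = c0 + Gi (gsel (Suc m) f) x" using H4 by blast
      have gs: "sq_int (gsel (Suc m) f)" using gsel[OF h, of "Suc m"] by simp
      have "\<bar>H m x\<bar> \<le> l + ((LINT z|lborel. (H m z)\<^sup>2) + (LINT z|lborel. (gsel (Suc m) f z)\<^sup>2)) / l"
        by (rule sup_bound[OF sH(1) gs rel l]) simp
      also have "\<dots> \<le> l + 2 * (Hk_norm (Suc m) f)\<^sup>2 / l"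
        by (rule bound_arith[OF sH(2) Hk_norm_ge l]) simp_all
      finally show ?thesis using jm by simp
    qed
    then show "\<bar>(deriv ^^ j) f x\<bar> \<le> l + 2 * (Hk_norm (Suc m) f)\<^sup>2 / l" using Hj[OF j] by simp
  qed
qed


lemma deriv_lin:
  fixes f g :: "real \<Rightarrow> real"
  assumes f: "\<And>i x. Suc i < n \<Longrightarrow> ((deriv ^^ i) f has_real_derivative (deriv ^^ Suc i) f x) (at x)"
    and g: "\<And>i x. Suc i < n \<Longrightarrow> ((deriv ^^ i) g has_real_derivative (deriv ^^ Suc i) g x) (at x)"
  shows "j < n \<Longrightarrow> (deriv ^^ j) (\<lambda>x. a * f x + b * g x) = (\<lambda>x. a * (deriv ^^ j) f x + b * (deriv ^^ j) g x)"
proof (induction j)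
  case 0 then show ?case by simp
next
  case (Suc j)
  then have IH: "(deriv ^^ j) (\<lambda>x. a * f x + b * g x) = (\<lambda>x. a * (deriv ^^ j) f x + b * (deriv ^^ j) g x)" by simp
  have "((\<lambda>x. a * (deriv ^^ j) f x + b * (deriv ^^ j) g x) has_real_derivative
          a * (deriv ^^ Suc j) f x + b * (deriv ^^ Suc j) g x) (at x)" for x
    using f[of j x] g[of j x] Suc.prems by (intro DERIV_add DERIV_cmult) auto
  then have "deriv (\<lambda>x. a * (deriv ^^ j) f x + b * (deriv ^^ j) g x) = (\<lambda>x. a * (deriv ^^ Suc j) f x + b * (deriv ^^ Suc j) g x)"
    by (intro ext DERIV_imp_deriv)
  then show ?case using IH by simp
qed

lemma sup_small:
  assumes b: "\<And>l. 0 < l \<Longrightarrow> \<bar>F\<bar> \<le> l + 2 * N\<^sup>2 / l" and N: "0 \<le> N" "N < e / 4" and e: "0 < e"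
  shows "\<bar>F\<bar> < (e::real)"
proof -
  have "\<bar>F\<bar> \<le> e / 2 + 2 * N\<^sup>2 / (e / 2)" using b[of "e/2"] e by simp
  moreover have "N\<^sup>2 < (e / 4)\<^sup>2" using N by (intro power_strict_mono) auto
  then have "2 * N\<^sup>2 / (e / 2) < 2 * (e / 4)\<^sup>2 / (e / 2)" using e by (intro divide_strict_right_mono) auto
  moreover have "2 * (e / 4)\<^sup>2 / (e / 2) = e / 4" using e by (simp add: power2_eq_square field_simps)
  ultimately show ?thesis using e by linarith
qed

lemma joint_cont:
  fixes Z :: "real \<Rightarrow> real \<Rightarrow> real"
  assumes S: "open S" and c: "\<And>t. t \<in> S \<Longrightarrow> continuous_on UNIV (Z t)"
    and u: "\<And>t e. t \<in> S \<Longrightarrow> 0 < e \<Longrightarrow> \<forall>\<^sub>F s in at t. \<forall>x. \<bar>Z s x - Z t x\<bar> < e"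
  shows "continuous_on (UNIV \<times> S) (\<lambda>p. Z (snd p) (fst p))"
proof (rule continuous_at_imp_continuous_on, safe)
  fix x0 t0 assume t0: "t0 \<in> S"
  show "isCont (\<lambda>p. Z (snd p) (fst p)) (x0, t0)"
    unfolding continuous_at_eps_delta
  proof (intro allI impI)
    fix e :: real assume e: "0 < e"
    from u[OF t0, of "e/2"] e obtain d1 where d1: "0 < d1" "\<And>s. s \<noteq> t0 \<Longrightarrow> dist s t0 < d1 \<Longrightarrow> \<forall>x. \<bar>Z s x - Z t0 x\<bar> < e/2"
      unfolding eventually_at by auto
    have "isCont (Z t0) x0" using c[OF t0] by (simp add: continuous_on_eq_continuous_at)
    then obtain d2 where d2: "0 < d2" "\<And>x. dist x x0 < d2 \<Longrightarrow> dist (Z t0 x) (Z t0 x0) < e/2"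
      unfolding continuous_at_eps_delta using e by (meson half_gt_zero)
    show "\<exists>d>0. \<forall>y. dist y (x0, t0) < d \<longrightarrow> dist (Z (snd y) (fst y)) (Z (snd (x0, t0)) (fst (x0, t0))) < e"
    proof (intro exI[of _ "min d1 d2"] conjI allI impI)
      show "0 < min d1 d2" using d1 d2 by simp
      fix y :: "real \<times> real" assume y: "dist y (x0, t0) < min d1 d2"
      obtain x s where ys: "y = (x, s)" by (cases y)
      have dx: "dist x x0 < d2" and ds: "dist s t0 < d1"
        using y ys by (auto simp: dist_Pair_Pair intro: le_less_trans[OF real_sqrt_sum_squares_ge1]
            le_less_trans[OF real_sqrt_sum_squares_ge2])
      have a: "\<bar>Z s x - Z t0 x\<bar> < e/2"
        using d1(2)[of s] ds e by (cases "s = t0") auto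
      have b: "\<bar>Z t0 x - Z t0 x0\<bar> < e/2" using d2(2)[OF dx] by (simp add: dist_real_def)
      have "\<bar>Z s x - Z t0 x0\<bar> \<le> \<bar>Z s x - Z t0 x\<bar> + \<bar>Z t0 x - Z t0 x0\<bar>"
        using abs_triangle_ineq[of "Z s x - Z t0 x" "Z t0 x - Z t0 x0"] by simp
      then have "\<bar>Z s x - Z t0 x0\<bar> < e" using a b by linarith
      then show "dist (Z (snd y) (fst y)) (Z (snd (x0, t0)) (fst (x0, t0))) < e"
        using ys by (simp add: dist_real_def)
    qed
  qed
qed

lemma C1_from_partials:
  fixes f fx ft :: "real \<times> real \<Rightarrow> real"
  assumes S: "open S" "convex S"
    and cx: "continuous_on (UNIV \<times> S) fx" and ct: "continuous_on (UNIV \<times> S) ft"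
    and dx: "\<And>x t. t \<in> S \<Longrightarrow> ((\<lambda>x. f (x, t)) has_real_derivative fx (x, t)) (at x)"
    and dt: "\<And>x t. t \<in> S \<Longrightarrow> ((\<lambda>t. f (x, t)) has_real_derivative ft (x, t)) (at t)"
  shows "C1_on (UNIV \<times> S) f"
  unfolding C1_on_def
proof (intro exI conjI ballI)
  show "continuous_on (UNIV \<times> S) fx" "continuous_on (UNIV \<times> S) ft" by fact+
  fix p :: "real \<times> real" assume p: "p \<in> UNIV \<times> S"
  obtain x t :: real where pe: "p = (x, t)" by (cases p)
  have t: "t \<in> S" using p pe by auto
  have "((\<lambda>(x, y). f (x, y)) has_derivative (\<lambda>(tx, ty). fx (x, t) * tx + blinfun_apply (blinfun_mult_right (ft (x, t))) ty))
      (at (x, t) within UNIV \<times> S)"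
  proof (rule has_derivative_partialsI[where fy="\<lambda>x y. blinfun_mult_right (ft (x, y))"])
    show "((\<lambda>x. f (x, t)) has_derivative (*) (fx (x, t))) (at x within UNIV)"
      using dx[OF t, of x] by (simp add: has_field_derivative_def)
    fix x' y assume y: "y \<in> S"
    show "((\<lambda>y. f (x', y)) has_derivative blinfun_apply (blinfun_mult_right (ft (x', y)))) (at y within S)"
      using dt[OF y, of x'] by (auto simp: has_field_derivative_def intro: has_derivative_at_withinI)
  next
    have "continuous (at (x, t) within UNIV \<times> S) ft"
      using cx ct p pe by (simp add: continuous_on_eq_continuous_within)
    then show "continuous (at (x, t) within UNIV \<times> S) (\<lambda>(x, y). blinfun_mult_right (ft (x, y)))"
      by (simp add: split_beta' continuous_intros)
  qed (use t S in auto)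
  moreover have "at (x, t) within UNIV \<times> S = at (x, t)"
    using t S by (intro at_within_open) (auto intro: open_Times)
  ultimately have "(f has_derivative (\<lambda>(tx, ty). fx (x, t) * tx + ft (x, t) * ty)) (at (x, t))"
    by (simp add: split_beta')
  then show "(f has_derivative (\<lambda>(h, k). fx p * h + ft p * k)) (at p)" using pe by simp
qed

lemma C1_affine:
  fixes f :: "real \<times> real \<Rightarrow> real"
  assumes "C1_on U f"
  shows "C1_on U (\<lambda>p. a * f p + c)"
proof -
  obtain fx ft where c: "continuous_on U fx" "continuous_on U ft"
    and d: "\<And>p. p \<in> U \<Longrightarrow> (f has_derivative (\<lambda>(h, k). fx p * h + ft p * k)) (at p)"
    using assms unfolding C1_on_def by blast
  have c1: "continuous_on U (\<lambda>p. a * fx p)" "continuous_on U (\<lambda>p. a * ft p)"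
    using c by (auto intro: continuous_intros)
  have d1: "((\<lambda>p. a * f p + c) has_derivative (\<lambda>(h, k). (a * fx p) * h + (a * ft p) * k)) (at p)"
    if p: "p \<in> U" for p
  proof -
    have "((\<lambda>p. a * f p + c) has_derivative (\<lambda>q. a * (case q of (h, k) \<Rightarrow> fx p * h + ft p * k) + 0)) (at p)"
      by (intro has_derivative_add has_derivative_mult_right d[OF p] has_derivative_const)
    then show ?thesis by (simp add: split_beta' algebra_simps)
  qed
  show ?thesis unfolding C1_on_def using c1 d1 by blast
qed

lemma nonint_contra:
  fixes f :: "real \<Rightarrow> real"
  assumes i: "integrable lborel f" and nn: "\<And>x. 0 \<le> f x" and a: "0 < a" and lb: "\<And>x. x1 \<le> x \<Longrightarrow> a \<le> f x"
  shows False
proof -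
  have "real n * a \<le> (LINT x|lborel. f x)" for n
  proof -
    have "real n * a = (LINT x|lborel. a * indicator {x1..x1 + real n} x)" by simp
    also have "\<dots> \<le> (LINT x|lborel. f x)"
    proof (rule integral_mono)
      show "integrable lborel (\<lambda>x. a * indicator {x1..x1 + real n} x)" by (intro integrable_mult_right integrable_ind_Icc)
      fix x show "a * indicator {x1..x1 + real n} x \<le> f x"
        using lb[of x] nn[of x] by (auto split: split_indicator)
    qed fact
    finally show ?thesis .
  qed
  moreover obtain n :: nat where "(LINT x|lborel. f x) / a < real n" using reals_Archimedean2 by blast
  then have "(LINT x|lborel. f x) < real n * a" using a by (simp add: field_simps)
  ultimately show False using not_le by blast
qed

lemma ode_zero:
  fixes v v1 v2 :: "real \<Rightarrow> real"
  assumes d1: "\<And>x. (v has_real_derivative v1 x) (at x)" and d2: "\<And>x. (v1 has_real_derivative v2 x) (at x)"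
    and eq: "\<And>x. (v1 x)\<^sup>2 - 2 * v x * v1 x + v x * v2 x = 0"
    and i: "integrable lborel (\<lambda>x. (v x)\<^sup>2)"
  shows "v x = 0"
proof -
  define q where "q x = v x * v1 x * exp (- 2 * x)" for x
  have "(q has_real_derivative ((v1 x * v1 x + v x * v2 x) * exp (- 2 * x) + v x * v1 x * (exp (- 2 * x) * (- 2)))) (at x)" for x
  proof -
    have m: "((\<lambda>x. v x * v1 x) has_real_derivative v1 x * v1 x + v x * v2 x) (at x)"
      using DERIV_mult[OF d1[of x] d2[of x]] by (simp add: mult.commute)
    have e: "((\<lambda>x. exp (- 2 * x)) has_real_derivative exp (- 2 * x) * (- 2)) (at x)"
      by (auto intro!: derivative_eq_intros)
    show ?thesis unfolding q_def[abs_def] using DERIV_mult[OF m e] by (simp add: algebra_simps)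
  qed
  moreover have "(v1 x * v1 x + v x * v2 x) * exp (- 2 * x) + v x * v1 x * (exp (- 2 * x) * (- 2)) = 0" for x
    using eq[of x] by (simp add: power2_eq_square algebra_simps)
  ultimately have "\<forall>x. (q has_real_derivative 0) (at x)" by simp
  then have qc: "q x = q 0" for x by (rule DERIV_isconst_all)
  define C where "C = q 0"
  have vv1: "v x * v1 x = C * exp (2 * x)" for x
  proof -
    have "v x * v1 x * exp (- 2 * x) = C" using qc[of x] by (simp add: q_def C_def)
    then have "v x * v1 x * exp (- 2 * x) * exp (2 * x) = C * exp (2 * x)" by simp
    then show ?thesis by (simp add: mult.assoc exp_add[symmetric])
  qed
  define r where "r x = (v x)\<^sup>2 - C * exp (2 * x)" for x
  have "(r has_real_derivative 2 * v x * v1 x - C * (exp (2 * x) * 2)) (at x)" for x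
  proof -
    have s: "((\<lambda>x. (v x)\<^sup>2) has_real_derivative 2 * v x * v1 x) (at x)"
      using DERIV_mult[OF d1[of x] d1[of x]] by (simp add: power2_eq_square mult.assoc)
    have e: "((\<lambda>x. C * exp (2 * x)) has_real_derivative C * (exp (2 * x) * 2)) (at x)"
      by (auto intro!: derivative_eq_intros)
    show ?thesis unfolding r_def[abs_def] using DERIV_diff[OF s e] by simp
  qed
  moreover have "2 * v x * v1 x - C * (exp (2 * x) * 2) = 0" for x using vv1[of x] by simp
  ultimately have "\<forall>x. (r has_real_derivative 0) (at x)" by simp
  then have rc: "r x = r 0" for x by (rule DERIV_isconst_all)
  define D where "D = r 0"
  have vsq: "(v x)\<^sup>2 = C * exp (2 * x) + D" for x using rc[of x] by (simp add: r_def D_def)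
  have ex: "2 * x \<le> exp (2 * x)" for x :: real
    using exp_ge_add_one_self[of "2 * x"] by linarith
  consider "C < 0" | "C > 0" | "C = 0" by linarith
  then show ?thesis
  proof cases
    case 1
    define x1 where "x1 = (\<bar>D\<bar> + 1) / (- 2 * C)"
    have "C * exp (2 * x1) \<le> C * (2 * x1)" using 1 ex[of x1] by (intro mult_left_mono_neg) auto
    also have "\<dots> = - (\<bar>D\<bar> + 1)" using 1 by (simp add: x1_def field_simps)
    finally have "(v x1)\<^sup>2 < 0" using vsq[of x1] by linarith
    then show ?thesis by simp
  next
    case 2
    define x1 where "x1 = (\<bar>D\<bar> + 1) / (2 * C)"
    have lb: "1 \<le> (v x)\<^sup>2" if "x1 \<le> x" for x
    proof -
      have "C * (2 * x1) \<le> C * exp (2 * x)"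
        using 2 that ex[of x] by (intro mult_left_mono) auto
      moreover have "C * (2 * x1) = \<bar>D\<bar> + 1" using 2 by (simp add: x1_def field_simps)
      ultimately show ?thesis using vsq[of x] by linarith
    qed
    have False by (rule nonint_contra[OF i _ _ lb]) auto
    then show ?thesis ..
  next
    case 3
    then have vD: "(v y)\<^sup>2 = D" for y using vsq[of y] by simp
    show ?thesis
    proof (cases "D = 0")
      case True then show ?thesis using vD[of x] by simp
    next
      case False
      have D0: "0 \<le> D" using vD[of 0] zero_le_power2[of "v 0"] by simp
      then have "0 < D" using False by simp
      have False by (rule nonint_contra[OF i _ \<open>0 < D\<close>, of 0]) (use vD D0 in auto)
      then show ?thesis ..
    qed
  qed
qed


definition Ut :: "ereal \<Rightarrow> real set" where "Ut T = {t. 0 < t \<and> ereal t < T}"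

lemma Ut_cases: "Ut T = {} \<or> Ut T = {0<..} \<or> (\<exists>r. Ut T = {0<..<r})"
proof (cases T)
  case (real r)
  then have "Ut T = {0<..<r}" by (auto simp: Ut_def)
  then show ?thesis by blast
next
  case PInf
  then have "Ut T = {0<..}" by (auto simp: Ut_def)
  then show ?thesis by blast
next
  case MInf
  then have "Ut T = {}" by (auto simp: Ut_def)
  then show ?thesis by blast
qed

lemma Ut_open: "open (Ut T)"
proof -
  consider "Ut T = {}" | "Ut T = {0<..}" | r where "Ut T = {0<..<r}" using Ut_cases[of T] by blast
  then show ?thesis by cases simp_all
qed

lemma Ut_convex: "convex (Ut T)"
proof -
  consider "Ut T = {}" | "Ut T = {0<..}" | r where "Ut T = {0<..<r}" using Ut_cases[of T] by blast
  then show ?thesis by cases (simp_all add: convex_real_interval)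
qed

lemma Ut_sub: "Ut T \<subseteq> Iv T"
  by (auto simp: Ut_def Iv_def)

lemma Udom_eq: "Udom T = UNIV \<times> Ut T"
  by (auto simp: Udom_def Ut_def)

lemma at_Ut: "t \<in> Ut T \<Longrightarrow> at t within Iv T = at t"
  by (rule at_within_open_subset[OF _ Ut_open Ut_sub])

lemma ev_in: "\<forall>\<^sub>F s in at t within S. s \<in> S"
  unfolding eventually_at_filter by simp

lemma Hk_mono: "Hk k f \<Longrightarrow> j \<le> k \<Longrightarrow> Hk j f"
  unfolding Hk_def by auto

lemma deriv_lin2:
  fixes f g :: "real \<Rightarrow> real"
  assumes f: "\<And>i x. Suc i < n \<Longrightarrow> ((deriv ^^ i) f has_real_derivative (deriv ^^ Suc i) f x) (at x)"
    and g: "\<And>i x. Suc i < n \<Longrightarrow> ((deriv ^^ i) g has_real_derivative (deriv ^^ Suc i) g x) (at x)"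
    and i: "Suc i < n"
  shows "((deriv ^^ i) (\<lambda>x. a * f x + b * g x) has_real_derivative (deriv ^^ Suc i) (\<lambda>x. a * f x + b * g x) x) (at x)"
proof -
  have e1: "(deriv ^^ i) (\<lambda>x. a * f x + b * g x) = (\<lambda>x. a * (deriv ^^ i) f x + b * (deriv ^^ i) g x)"
    using i by (intro deriv_lin f g) auto
  have e2: "(deriv ^^ Suc i) (\<lambda>x. a * f x + b * g x) = (\<lambda>x. a * (deriv ^^ Suc i) f x + b * (deriv ^^ Suc i) g x)"
    using i by (intro deriv_lin f g) auto
  show ?thesis unfolding e1 e2 using f[OF i, of x] g[OF i, of x] by (intro DERIV_add DERIV_cmult)
qed

lemma sup_lin3:
  fixes f1 f2 f3 h :: "real \<Rightarrow> real"
  assumes h1: "Hk (Suc m) f1" and h2: "Hk (Suc m) f2" and h3: "Hk (Suc m) f3"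
    and c1: "continuous_on UNIV f1" and c2: "continuous_on UNIV f2" and c3: "continuous_on UNIV f3"
    and hm: "h \<in> borel_measurable lborel"
    and ae: "AE x in lborel. a * f1 x + b * f2 x + c * f3 x = h x"
    and j: "j < Suc m" and l: "0 < l"
  shows "\<bar>a * (deriv ^^ j) f1 x + b * (deriv ^^ j) f2 x + c * (deriv ^^ j) f3 x\<bar> \<le> l + 2 * (Hk_norm (Suc m) h)\<^sup>2 / l"
proof -
  define g where "g = (\<lambda>x. a * f1 x + b * f2 x)"
  define k where "k = (\<lambda>x. 1 * g x + c * f3 x)"
  have kk: "k = (\<lambda>x. a * f1 x + b * f2 x + c * f3 x)" by (simp add: k_def g_def)
  have hg: "Hk (Suc m) g" unfolding g_def by (rule Hk_lin[OF h1 h2])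
  have hk: "Hk (Suc m) k" unfolding k_def by (rule Hk_lin[OF hg h3])
  have cg: "continuous_on UNIV g" unfolding g_def using c1 c2 by (intro continuous_intros)
  have ck: "continuous_on UNIV k" unfolding k_def using cg c3 by (intro continuous_intros)
  have r1: "\<And>i x. Suc i < Suc m \<Longrightarrow> ((deriv ^^ i) f1 has_real_derivative (deriv ^^ Suc i) f1 x) (at x)"
    using reg_cont(2)[OF h1 c1] by blast
  have r2: "\<And>i x. Suc i < Suc m \<Longrightarrow> ((deriv ^^ i) f2 has_real_derivative (deriv ^^ Suc i) f2 x) (at x)"
    using reg_cont(2)[OF h2 c2] by blast
  have r3: "\<And>i x. Suc i < Suc m \<Longrightarrow> ((deriv ^^ i) f3 has_real_derivative (deriv ^^ Suc i) f3 x) (at x)"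
    using reg_cont(2)[OF h3 c3] by blast
  have dg: "\<And>i x. Suc i < Suc m \<Longrightarrow> ((deriv ^^ i) g has_real_derivative (deriv ^^ Suc i) g x) (at x)"
    unfolding g_def by (rule deriv_lin2[OF r1 r2])
  have eg: "(deriv ^^ j) g = (\<lambda>x. a * (deriv ^^ j) f1 x + b * (deriv ^^ j) f2 x)"
    unfolding g_def by (rule deriv_lin[OF r1 r2 j])
  have ek: "(deriv ^^ j) k = (\<lambda>x. 1 * (deriv ^^ j) g x + c * (deriv ^^ j) f3 x)"
    unfolding k_def by (rule deriv_lin[OF dg r3 j])
  have km: "k \<in> borel_measurable lborel"
    using borel_measurable_continuous_onI[OF ck] by simp
  have nk: "Hk_norm (Suc m) h = Hk_norm (Suc m) k"
    by (rule Hk_AE(2)[OF hk hm]) (use ae in \<open>simp add: kk\<close>)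
  have "\<bar>(deriv ^^ j) k x\<bar> \<le> l + 2 * (Hk_norm (Suc m) k)\<^sup>2 / l"
    using reg_cont(3)[OF hk ck] j l by blast
  then show ?thesis unfolding nk ek eg by simp
qed

lemma tendsto_small:
  fixes N :: "'a \<Rightarrow> real" and e :: real
  assumes "(N \<longlongrightarrow> 0) F" "0 < e"
  shows "\<forall>\<^sub>F s in F. N s < e"
  using order_tendstoD(2)[OF assms] .

context
  fixes T :: ereal and u :: "real \<Rightarrow> real \<Rightarrow> real"
  assumes B: "Bsp T u"
begin

definition uD :: "nat \<Rightarrow> real \<Rightarrow> real \<Rightarrow> real" where "uD j t = (deriv ^^ j) (u t)"

lemma hk4: "t \<in> Iv T \<Longrightarrow> Hk (Suc 3) (u t)"
  using B unfolding Bsp_def cont_Hk_def by simp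

lemma cu: "t \<in> Iv T \<Longrightarrow> continuous_on UNIV (u t)"
  using B unfolding Bsp_def by simp

lemma uD_cont: "t \<in> Iv T \<Longrightarrow> j < 4 \<Longrightarrow> continuous_on UNIV (uD j t)"
  unfolding uD_def using reg_cont(1)[OF hk4 cu] by simp

lemma uD_deriv: "t \<in> Iv T \<Longrightarrow> j < 3 \<Longrightarrow> (uD j t has_real_derivative uD (Suc j) t x) (at x)"
  unfolding uD_def using reg_cont(2)[OF hk4 cu] by simp

definition uw :: "real \<Rightarrow> real \<Rightarrow> real" where
  "uw = (SOME w. time_deriv_Hk 3 (Iv T) u w \<and> cont_Hk 3 (Iv T) w)"

lemma uw: "time_deriv_Hk 3 (Iv T) u uw \<and> cont_Hk 3 (Iv T) uw"
proof -
  have "\<exists>w. time_deriv_Hk 3 (Iv T) u w \<and> cont_Hk 3 (Iv T) w"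
    using B unfolding Bsp_def C1_Hk_def by blast
  then show ?thesis unfolding uw_def by (rule someI_ex)
qed

lemma hkw: "t \<in> Iv T \<Longrightarrow> Hk (Suc 2) (uw t)"
  using uw unfolding cont_Hk_def by simp

definition uW :: "real \<Rightarrow> real \<Rightarrow> real" where
  "uW t = (SOME F. continuous_on UNIV F \<and> (AE x in lborel. uw t x = F x))"

lemma uW: assumes t: "t \<in> Iv T" shows "continuous_on UNIV (uW t) \<and> (AE x in lborel. uw t x = uW t x)"
  unfolding uW_def by (rule someI_ex[OF reg_rep[OF hkw[OF t]]])

lemma uW_meas: "t \<in> Iv T \<Longrightarrow> uW t \<in> borel_measurable lborel"
  using borel_measurable_continuous_onI[of "uW t"] uW by simp

lemma hkW: "t \<in> Iv T \<Longrightarrow> Hk (Suc 2) (uW t)"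
  using Hk_AE(1)[OF hkw uW_meas] uW by blast

definition uE :: "nat \<Rightarrow> real \<Rightarrow> real \<Rightarrow> real" where "uE j t = (deriv ^^ j) (uW t)"

lemma uE_cont: "t \<in> Iv T \<Longrightarrow> j < 3 \<Longrightarrow> continuous_on UNIV (uE j t)"
  unfolding uE_def using reg_cont(1)[OF hkW] uW by simp

lemma uE_deriv: "t \<in> Iv T \<Longrightarrow> j < 2 \<Longrightarrow> (uE j t has_real_derivative uE (Suc j) t x) (at x)"
  unfolding uE_def using reg_cont(2)[OF hkW] uW by simp

lemma um: "t \<in> Iv T \<Longrightarrow> u t \<in> borel_measurable lborel"
  using borel_measurable_continuous_onI[OF cu] by simp

lemma K1:
  assumes t: "t \<in> Iv T" and e: "0 < e"
  shows "\<forall>\<^sub>F s in at t within Iv T. \<forall>j<4. \<forall>x. \<bar>uD j s x - uD j t x\<bar> < e"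
proof -
  have "((\<lambda>s. Hk_norm 4 (\<lambda>x. u s x - u t x)) \<longlongrightarrow> 0) (at t within Iv T)"
    using B t unfolding Bsp_def cont_Hk_def by blast
  then have "\<forall>\<^sub>F s in at t within Iv T. Hk_norm 4 (\<lambda>x. u s x - u t x) < e / 4"
    by (rule tendsto_small) (use e in simp)
  then show ?thesis using ev_in[where t=t and S="Iv T"]
  proof eventually_elim
    case (elim s)
    have s: "s \<in> Iv T" by (rule elim(2))
    have hm: "(\<lambda>x. u s x - u t x) \<in> borel_measurable lborel"
      using um[OF s] um[OF t] by (rule borel_measurable_diff)
    show ?case
    proof (intro allI impI)
      fix j x assume j: "j < (4::nat)"
      have b: "\<bar>uD j s x - uD j t x\<bar> \<le> l + 2 * (Hk_norm 4 (\<lambda>x. u s x - u t x))\<^sup>2 / l" if l: "0 < l" for l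
      proof -
        have "\<bar>1 * (deriv ^^ j) (u s) x + (-1) * (deriv ^^ j) (u t) x + 0 * (deriv ^^ j) (u t) x\<bar>
          \<le> l + 2 * (Hk_norm (Suc 3) (\<lambda>x. u s x - u t x))\<^sup>2 / l"
          by (rule sup_lin3[OF hk4[OF s] hk4[OF t] hk4[OF t] cu[OF s] cu[OF t] cu[OF t] hm _ _ l])
            (simp_all add: j)
        then show ?thesis by (simp add: uD_def)
      qed
      show "\<bar>uD j s x - uD j t x\<bar> < e"
        by (rule sup_small[OF b Hk_norm_nonneg elim(1) e])
    qed
  qed
qed

lemma ev_in2: "\<forall>\<^sub>F s in at t within S. s \<in> S \<and> s \<noteq> t"
  unfolding eventually_at_filter by simp

lemma uw_meas: "t \<in> Iv T \<Longrightarrow> uw t \<in> borel_measurable lborel"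
  using hkw[of t] unfolding Hk_def sq_int_def by simp

lemma K2:
  assumes t: "t \<in> Iv T" and e: "0 < e"
  shows "\<forall>\<^sub>F s in at t within Iv T. \<forall>j<3. \<forall>x. \<bar>uE j s x - uE j t x\<bar> < e"
proof -
  have "((\<lambda>s. Hk_norm 3 (\<lambda>x. uw s x - uw t x)) \<longlongrightarrow> 0) (at t within Iv T)"
    using uw t unfolding cont_Hk_def by blast
  then have "\<forall>\<^sub>F s in at t within Iv T. Hk_norm 3 (\<lambda>x. uw s x - uw t x) < e / 4"
    by (rule tendsto_small) (use e in simp)
  then show ?thesis using ev_in[where t=t and S="Iv T"]
  proof eventually_elim
    case (elim s)
    have s: "s \<in> Iv T" by (rule elim(2))
    have hm: "(\<lambda>x. uw s x - uw t x) \<in> borel_measurable lborel"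
      using uw_meas[OF s] uw_meas[OF t] by (rule borel_measurable_diff)
    have ae: "AE x in lborel. 1 * uW s x + (-1) * uW t x + 0 * uW t x = uw s x - uw t x"
      using uW[OF s] uW[OF t] by (auto elim: eventually_elim2)
    show ?case
    proof (intro allI impI)
      fix j x assume j: "j < (3::nat)"
      have b: "\<bar>uE j s x - uE j t x\<bar> \<le> l + 2 * (Hk_norm 3 (\<lambda>x. uw s x - uw t x))\<^sup>2 / l" if l: "0 < l" for l
      proof -
        have "\<bar>1 * (deriv ^^ j) (uW s) x + (-1) * (deriv ^^ j) (uW t) x + 0 * (deriv ^^ j) (uW t) x\<bar>
          \<le> l + 2 * (Hk_norm (Suc 2) (\<lambda>x. uw s x - uw t x))\<^sup>2 / l"
          by (rule sup_lin3[OF hkW[OF s] hkW[OF t] hkW[OF t] _ _ _ hm ae _ l])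
            (use uW[OF s] uW[OF t] j in simp_all)
        then show ?thesis by (simp add: uE_def)
      qed
      show "\<bar>uE j s x - uE j t x\<bar> < e"
        by (rule sup_small[OF b Hk_norm_nonneg elim(1) e])
    qed
  qed
qed

lemma K3:
  assumes t: "t \<in> Iv T" and e: "0 < e"
  shows "\<forall>\<^sub>F s in at t within Iv T. \<forall>j<3. \<forall>x. \<bar>(uD j s x - uD j t x) / (s - t) - uE j t x\<bar> < e"
proof -
  have "((\<lambda>s. Hk_norm 3 (\<lambda>x. (u s x - u t x) / (s - t) - uw t x)) \<longlongrightarrow> 0) (at t within Iv T)"
    using uw t unfolding time_deriv_Hk_def by blast
  then have "\<forall>\<^sub>F s in at t within Iv T. Hk_norm 3 (\<lambda>x. (u s x - u t x) / (s - t) - uw t x) < e / 4"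
    by (rule tendsto_small) (use e in simp)
  then show ?thesis using ev_in2[where t=t and S="Iv T"]
  proof eventually_elim
    case (elim s)
    have s: "s \<in> Iv T" and st: "s \<noteq> t" using elim(2) by auto
    have hm: "(\<lambda>x. (u s x - u t x) / (s - t) - uw t x) \<in> borel_measurable lborel"
      using um[OF s] um[OF t] uw_meas[OF t] by measurable
    have ae: "AE x in lborel. (1 / (s - t)) * u s x + (- (1 / (s - t))) * u t x + (-1) * uW t x
        = (u s x - u t x) / (s - t) - uw t x"
      using uW[OF t] by (auto elim: eventually_mono simp: diff_divide_distrib)
    have h3: "Hk (Suc 2) (u r)" if "r \<in> Iv T" for r using Hk_mono[OF hk4[OF that]] by simp
    show ?case
    proof (intro allI impI)
      fix j x assume j: "j < (3::nat)"
      have b: "\<bar>(uD j s x - uD j t x) / (s - t) - uE j t x\<bar>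
          \<le> l + 2 * (Hk_norm 3 (\<lambda>x. (u s x - u t x) / (s - t) - uw t x))\<^sup>2 / l" if l: "0 < l" for l
      proof -
        have "\<bar>(1 / (s - t)) * (deriv ^^ j) (u s) x + (- (1 / (s - t))) * (deriv ^^ j) (u t) x + (-1) * (deriv ^^ j) (uW t) x\<bar>
          \<le> l + 2 * (Hk_norm (Suc 2) (\<lambda>x. (u s x - u t x) / (s - t) - uw t x))\<^sup>2 / l"
          by (rule sup_lin3[OF h3[OF s] h3[OF t] hkW[OF t] cu[OF s] cu[OF t] _ hm ae _ l])
            (use uW[OF t] j in simp_all)
        then show ?thesis by (simp add: uD_def uE_def diff_divide_distrib)
      qed
      show "\<bar>(uD j s x - uD j t x) / (s - t) - uE j t x\<bar> < e"
        by (rule sup_small[OF b Hk_norm_nonneg elim(1) e])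
    qed
  qed
qed

lemma PT:
  assumes t: "t \<in> Ut T" and j: "j < 3"
  shows "((\<lambda>s. uD j s x) has_real_derivative uE j t x) (at t)"
  unfolding has_field_derivative_iff
proof (rule tendstoI)
  fix e :: real assume e: "0 < e"
  have tI: "t \<in> Iv T" using t Ut_sub by blast
  from K3[OF tI e] show "\<forall>\<^sub>F s in at t. dist ((uD j s x - uD j t x) / (s - t)) (uE j t x) < e"
    unfolding at_Ut[OF t] by (rule eventually_mono) (use j in \<open>auto simp: dist_real_def\<close>)
qed

lemma JD:
  assumes j: "j < 4"
  shows "continuous_on (UNIV \<times> Ut T) (\<lambda>p. uD j (snd p) (fst p))"
proof (rule joint_cont[OF Ut_open])
  fix t assume t: "t \<in> Ut T"
  then have tI: "t \<in> Iv T" using Ut_sub by blast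
  show "continuous_on UNIV (uD j t)" by (rule uD_cont[OF tI j])
  fix e :: real assume e: "0 < e"
  from K1[OF tI e] show "\<forall>\<^sub>F s in at t. \<forall>x. \<bar>uD j s x - uD j t x\<bar> < e"
    unfolding at_Ut[OF t] by (rule eventually_mono) (use j in auto)
qed

lemma JE:
  assumes j: "j < 3"
  shows "continuous_on (UNIV \<times> Ut T) (\<lambda>p. uE j (snd p) (fst p))"
proof (rule joint_cont[OF Ut_open])
  fix t assume t: "t \<in> Ut T"
  then have tI: "t \<in> Iv T" using Ut_sub by blast
  show "continuous_on UNIV (uE j t)" by (rule uE_cont[OF tI j])
  fix e :: real assume e: "0 < e"
  from K2[OF tI e] show "\<forall>\<^sub>F s in at t. \<forall>x. \<bar>uE j s x - uE j t x\<bar> < e"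
    unfolding at_Ut[OF t] by (rule eventually_mono) (use j in auto)
qed

lemma mDP_eq: "mDP u (x, t) = uD 0 t x - uD 2 t x"
  by (simp add: mDP_def uD_def numeral_2_eq_2)

lemma FDP_eq: "FDP u (x, t) = (uD 1 t x)\<^sup>2 - 2 * uD 0 t x * uD 1 t x + uD 0 t x * uD 2 t x"
  by (simp add: FDP_def uD_def numeral_2_eq_2)

lemma C1_mDP: "C1_on (Udom T) (mDP u)"
  unfolding Udom_eq
proof (rule C1_from_partials[OF Ut_open Ut_convex,
      where fx="\<lambda>p. uD 1 (snd p) (fst p) - uD 3 (snd p) (fst p)"
        and ft="\<lambda>p. uE 0 (snd p) (fst p) - uE 2 (snd p) (fst p)"])
  show "continuous_on (UNIV \<times> Ut T) (\<lambda>p. uD 1 (snd p) (fst p) - uD 3 (snd p) (fst p))"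
    by (intro continuous_on_diff JD) auto
  show "continuous_on (UNIV \<times> Ut T) (\<lambda>p. uE 0 (snd p) (fst p) - uE 2 (snd p) (fst p))"
    by (intro continuous_on_diff JE) auto
  fix x t assume t: "t \<in> Ut T"
  then have tI: "t \<in> Iv T" using Ut_sub by blast
  have "((\<lambda>x. uD 0 t x - uD 2 t x) has_real_derivative uD 1 t x - uD 3 t x) (at x)"
    using DERIV_diff[OF uD_deriv[OF tI, of 0 x] uD_deriv[OF tI, of 2 x]] by (simp add: numeral_3_eq_3)
  then show "((\<lambda>x. mDP u (x, t)) has_real_derivative uD 1 (snd (x, t)) (fst (x, t)) - uD 3 (snd (x, t)) (fst (x, t))) (at x)"
    by (simp add: mDP_eq)
  have "((\<lambda>t. uD 0 t x - uD 2 t x) has_real_derivative uE 0 t x - uE 2 t x) (at t)"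
    by (intro DERIV_diff PT[OF t]) auto
  then show "((\<lambda>t. mDP u (x, t)) has_real_derivative uE 0 (snd (x, t)) (fst (x, t)) - uE 2 (snd (x, t)) (fst (x, t))) (at t)"
    by (simp add: mDP_eq)
qed

end

lemma F_deriv:
  fixes a0 a1 a2 :: "real \<Rightarrow> real"
  assumes d0: "(a0 has_real_derivative b0) (at z)" and d1: "(a1 has_real_derivative b1) (at z)"
    and d2: "(a2 has_real_derivative b2) (at z)"
  shows "((\<lambda>z. (a1 z)\<^sup>2 - 2 * a0 z * a1 z + a0 z * a2 z) has_real_derivative
      (2 * a1 z * b1 - 2 * (b0 * a1 z + a0 z * b1) + (b0 * a2 z + a0 z * b2))) (at z)"
proof -
  have s: "((\<lambda>z. (a1 z)\<^sup>2) has_real_derivative 2 * a1 z * b1) (at z)"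
    using DERIV_mult[OF d1 d1] by (simp add: power2_eq_square algebra_simps)
  have p: "((\<lambda>z. 2 * a0 z * a1 z) has_real_derivative 2 * (b0 * a1 z + a0 z * b1)) (at z)"
    using DERIV_cmult[OF DERIV_mult[OF d0 d1], of 2] by (simp add: algebra_simps)
  have q: "((\<lambda>z. a0 z * a2 z) has_real_derivative b0 * a2 z + a0 z * b2) (at z)"
    using DERIV_mult[OF d0 d2] by (simp add: algebra_simps)
  show ?thesis using DERIV_add[OF DERIV_diff[OF s p] q] by simp
qed

context
  fixes T :: ereal and u :: "real \<Rightarrow> real \<Rightarrow> real"
  assumes B: "Bsp T u"
begin

lemma C1_FDP: "C1_on (Udom T) (FDP u)"
  unfolding Udom_eq
proof (rule C1_from_partials[OF Ut_open Ut_convex,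
      where fx="\<lambda>p. 2 * uD u 1 (snd p) (fst p) * uD u 2 (snd p) (fst p)
         - 2 * (uD u 1 (snd p) (fst p) * uD u 1 (snd p) (fst p) + uD u 0 (snd p) (fst p) * uD u 2 (snd p) (fst p))
         + (uD u 1 (snd p) (fst p) * uD u 2 (snd p) (fst p) + uD u 0 (snd p) (fst p) * uD u 3 (snd p) (fst p))"
        and ft="\<lambda>p. 2 * uD u 1 (snd p) (fst p) * uE T u 1 (snd p) (fst p)
         - 2 * (uE T u 0 (snd p) (fst p) * uD u 1 (snd p) (fst p) + uD u 0 (snd p) (fst p) * uE T u 1 (snd p) (fst p))
         + (uE T u 0 (snd p) (fst p) * uD u 2 (snd p) (fst p) + uD u 0 (snd p) (fst p) * uE T u 2 (snd p) (fst p))"])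
  have c: "\<And>j. j < 4 \<Longrightarrow> continuous_on (UNIV \<times> Ut T) (\<lambda>p. uD u j (snd p) (fst p))"
    by (rule JD[OF B])
  have ce: "\<And>j. j < 3 \<Longrightarrow> continuous_on (UNIV \<times> Ut T) (\<lambda>p. uE T u j (snd p) (fst p))"
    by (rule JE[OF B])
  show "continuous_on (UNIV \<times> Ut T) (\<lambda>p. 2 * uD u 1 (snd p) (fst p) * uD u 2 (snd p) (fst p)
         - 2 * (uD u 1 (snd p) (fst p) * uD u 1 (snd p) (fst p) + uD u 0 (snd p) (fst p) * uD u 2 (snd p) (fst p))
         + (uD u 1 (snd p) (fst p) * uD u 2 (snd p) (fst p) + uD u 0 (snd p) (fst p) * uD u 3 (snd p) (fst p)))"
    by (intro continuous_on_add continuous_on_diff continuous_on_mult continuous_on_const c) auto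
  show "continuous_on (UNIV \<times> Ut T) (\<lambda>p. 2 * uD u 1 (snd p) (fst p) * uE T u 1 (snd p) (fst p)
         - 2 * (uE T u 0 (snd p) (fst p) * uD u 1 (snd p) (fst p) + uD u 0 (snd p) (fst p) * uE T u 1 (snd p) (fst p))
         + (uE T u 0 (snd p) (fst p) * uD u 2 (snd p) (fst p) + uD u 0 (snd p) (fst p) * uE T u 2 (snd p) (fst p)))"
    by (intro continuous_on_add continuous_on_diff continuous_on_mult continuous_on_const c ce) auto
  fix x t assume t: "t \<in> Ut T"
  then have tI: "t \<in> Iv T" using Ut_sub by blast
  have "((\<lambda>x. (uD u 1 t x)\<^sup>2 - 2 * uD u 0 t x * uD u 1 t x + uD u 0 t x * uD u 2 t x) has_real_derivative
      (2 * uD u 1 t x * uD u 2 t x - 2 * (uD u 1 t x * uD u 1 t x + uD u 0 t x * uD u 2 t x)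
        + (uD u 1 t x * uD u 2 t x + uD u 0 t x * uD u 3 t x))) (at x)"
    using F_deriv[OF uD_deriv[OF B tI, of 0 x] uD_deriv[OF B tI, of 1 x] uD_deriv[OF B tI, of 2 x]]
    by (simp add: numeral_3_eq_3 numeral_2_eq_2)
  then show "((\<lambda>x. FDP u (x, t)) has_real_derivative (\<lambda>p. 2 * uD u 1 (snd p) (fst p) * uD u 2 (snd p) (fst p)
         - 2 * (uD u 1 (snd p) (fst p) * uD u 1 (snd p) (fst p) + uD u 0 (snd p) (fst p) * uD u 2 (snd p) (fst p))
         + (uD u 1 (snd p) (fst p) * uD u 2 (snd p) (fst p) + uD u 0 (snd p) (fst p) * uD u 3 (snd p) (fst p))) (x, t)) (at x)"
    by (simp add: FDP_eq[OF B])
  have "((\<lambda>t. (uD u 1 t x)\<^sup>2 - 2 * uD u 0 t x * uD u 1 t x + uD u 0 t x * uD u 2 t x) has_real_derivative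
      (2 * uD u 1 t x * uE T u 1 t x - 2 * (uE T u 0 t x * uD u 1 t x + uD u 0 t x * uE T u 1 t x)
        + (uE T u 0 t x * uD u 2 t x + uD u 0 t x * uE T u 2 t x))) (at t)"
    using F_deriv[OF PT[OF B t, of 0 x] PT[OF B t, of 1 x] PT[OF B t, of 2 x]] by simp
  then show "((\<lambda>t. FDP u (x, t)) has_real_derivative (\<lambda>p. 2 * uD u 1 (snd p) (fst p) * uE T u 1 (snd p) (fst p)
         - 2 * (uE T u 0 (snd p) (fst p) * uD u 1 (snd p) (fst p) + uD u 0 (snd p) (fst p) * uE T u 1 (snd p) (fst p))
         + (uE T u 0 (snd p) (fst p) * uD u 2 (snd p) (fst p) + uD u 0 (snd p) (fst p) * uE T u 2 (snd p) (fst p))) (x, t)) (at t)"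
    by (simp add: FDP_eq[OF B])
qed

lemma FDP_cont: "continuous_on (Udom T) (FDP u)"
proof -
  have c: "\<And>j. j < 4 \<Longrightarrow> continuous_on (UNIV \<times> Ut T) (\<lambda>p. uD u j (snd p) (fst p))"
    by (rule JD[OF B])
  have A: "continuous_on (UNIV \<times> Ut T) (\<lambda>p. (uD u 1 (snd p) (fst p))\<^sup>2 - 2 * uD u 0 (snd p) (fst p) * uD u 1 (snd p) (fst p)
      + uD u 0 (snd p) (fst p) * uD u 2 (snd p) (fst p))"
    by (intro continuous_on_add continuous_on_diff continuous_on_mult continuous_on_const continuous_on_power c) auto
  have E: "(\<lambda>p. (uD u 1 (snd p) (fst p))\<^sup>2 - 2 * uD u 0 (snd p) (fst p) * uD u 1 (snd p) (fst p)
      + uD u 0 (snd p) (fst p) * uD u 2 (snd p) (fst p)) = FDP u"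
  proof (rule ext)
    fix p :: "real \<times> real"
    obtain x t where p: "p = (x, t)" by (cases p)
    show "(uD u 1 (snd p) (fst p))\<^sup>2 - 2 * uD u 0 (snd p) (fst p) * uD u 1 (snd p) (fst p)
      + uD u 0 (snd p) (fst p) * uD u 2 (snd p) (fst p) = FDP u p"
      by (simp add: p FDP_eq[OF B])
  qed
  show ?thesis using A unfolding E Udom_eq .
qed

lemma u_zero:
  assumes z: "\<forall>p\<in>Udom T. FDP u p = 0" and t: "t \<in> Ut T"
  shows "u t x = 0"
proof -
  have tI: "t \<in> Iv T" using t Ut_sub by blast
  have d1: "\<And>x. (uD u 0 t has_real_derivative uD u 1 t x) (at x)" using uD_deriv[OF B tI, of 0] by simp
  have d2: "\<And>x. (uD u 1 t has_real_derivative uD u 2 t x) (at x)" using uD_deriv[OF B tI, of 1] by (simp add: numeral_2_eq_2)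
  have eq: "(uD u 1 t x)\<^sup>2 - 2 * uD u 0 t x * uD u 1 t x + uD u 0 t x * uD u 2 t x = 0" for x
  proof -
    have "(x, t) \<in> Udom T" using t by (simp add: Udom_eq)
    then have "FDP u (x, t) = 0" using z by blast
    then show ?thesis by (simp only: FDP_eq[OF B])
  qed
  have int: "integrable lborel (\<lambda>x. (uD u 0 t x)\<^sup>2)"
  proof -
    have e: "uD u 0 t = u t" unfolding uD_def[OF B] by simp
    show ?thesis unfolding e using hk4[OF B tI] by (simp add: Hk_def sq_int_def)
  qed
  have "uD u 0 t x = 0" by (rule ode_zero[OF d1 d2 eq int])
  then show ?thesis by (simp add: uD_def[OF B])
qed


end


lemma Udom_open: "open (Udom T)"
  unfolding Udom_eq by (intro open_Times open_UNIV Ut_open)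

lemma nontrivial_FDP:
  assumes B: "Bsp T u" and T0: "T > 0" and nz: "\<not> (AE x in lborel. u0 x = 0)"
    and init: "AE x in lborel. u 0 x = u0 x"
  shows "\<exists>p\<in>Udom T. FDP u p \<noteq> 0"
proof (rule ccontr)
  assume "\<not> (\<exists>p\<in>Udom T. FDP u p \<noteq> 0)"
  then have z: "\<forall>p\<in>Udom T. FDP u p = 0" by blast
  obtain d where d: "0 < ereal d" "ereal d < T" using ereal_dense2[OF T0] by blast
  then have d0: "0 < d" by simp
  define sq where "sq n = d / real (Suc n)" for n
  have sqU: "sq n \<in> Ut T" for n
  proof -
    have "sq n \<le> d" using d0 by (simp add: sq_def divide_le_eq)
    then have "ereal (sq n) < T" using d(2) by (meson ereal_less_eq(3) le_less_trans)
    moreover have "0 < sq n" using d0 by (simp add: sq_def)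
    ultimately show ?thesis by (simp add: Ut_def)
  qed
  have uz: "u (sq n) = (\<lambda>x. 0)" for n
    by (rule ext) (rule u_zero[OF B z sqU])
  have I0: "0 \<in> Iv T" using T0 by (simp add: Iv_def zero_ereal_def)
  have lim: "((\<lambda>s. Hk_norm 4 (\<lambda>x. u s x - u 0 x)) \<longlongrightarrow> 0) (at 0 within Iv T)"
    using B I0 unfolding Bsp_def cont_Hk_def by blast
  have sq0: "sq \<longlonglongrightarrow> 0"
  proof -
    have "(\<lambda>n. d * inverse (real (Suc n))) \<longlonglongrightarrow> d * 0"
      by (intro tendsto_mult tendsto_const LIMSEQ_inverse_real_of_nat)
    moreover have "sq = (\<lambda>n. d * inverse (real (Suc n)))" by (rule ext) (simp add: sq_def divide_inverse)
    ultimately show ?thesis by simp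
  qed
  have fl: "filterlim sq (at 0 within Iv T) sequentially"
    unfolding filterlim_at
  proof
    have "sq n \<in> Iv T \<and> sq n \<noteq> 0" for n
    proof -
      have "sq n \<in> Ut T" by (rule sqU)
      then show ?thesis using Ut_sub[of T] by (auto simp: Ut_def)
    qed
    then show "\<forall>\<^sub>F n in sequentially. sq n \<in> Iv T \<and> sq n \<noteq> 0" by simp
  qed (rule sq0)
  have "(\<lambda>n. Hk_norm 4 (\<lambda>x. u (sq n) x - u 0 x)) \<longlonglongrightarrow> 0"
    by (rule filterlim_compose[OF lim fl])
  then have "(\<lambda>n. Hk_norm 4 (\<lambda>x. 0 - u 0 x)) \<longlonglongrightarrow> 0" by (simp add: uz)
  then have c0: "Hk_norm 4 (\<lambda>x. 0 - u 0 x) = 0" by (simp add: LIMSEQ_const_iff)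
  have h0: "Hk 4 (u 0)" using B I0 unfolding Bsp_def cont_Hk_def by blast
  have hv: "Hk 4 (\<lambda>x. 0 - u 0 x)"
  proof -
    have "Hk 4 (\<lambda>x. 0 * u 0 x + (-1) * u 0 x)" by (rule Hk_lin[OF h0 h0])
    moreover have "(\<lambda>x. 0 * u 0 x + (-1) * u 0 x) = (\<lambda>x. 0 - u 0 x)" by (rule ext) simp
    ultimately show ?thesis by simp
  qed
  define v where "v = (\<lambda>x. 0 - u 0 x)"
  have sv: "sq_int v" using hv by (simp add: Hk_def v_def)
  have gs: "sq_int (gsel 0 v) \<and> weak_deriv 0 v (gsel 0 v)" using gsel[OF hv[folded v_def], of 0] by simp
  have ae: "AE x in lborel. v x = gsel 0 v x" using wd0[OF sv] gs by blast
  have vm: "v \<in> borel_measurable lborel" using sv by (simp add: sq_int_def)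
  have "(LINT x|lborel. (v x)\<^sup>2) = (LINT x|lborel. (gsel 0 v x)\<^sup>2)"
    by (rule sq_int_AE(2)[OF conjunct1[OF gs] vm]) (use ae in \<open>auto elim: eventually_mono\<close>)
  also have "\<dots> \<le> (Hk_norm 4 v)\<^sup>2" by (rule Hk_norm_ge) simp
  also have "\<dots> = 0" using c0 by (simp add: v_def)
  finally have le: "(LINT x|lborel. (v x)\<^sup>2) \<le> 0" .
  have iv: "integrable lborel (\<lambda>x. (v x)\<^sup>2)" using sv by (simp add: sq_int_def)
  have ge: "0 \<le> (LINT x|lborel. (v x)\<^sup>2)" by (intro integral_nonneg_AE) simp
  have "(LINT x|lborel. (v x)\<^sup>2) = 0" using le ge by linarith
  then have "AE x in lborel. (v x)\<^sup>2 = 0" using integral_nonneg_eq_0_iff_AE[OF iv] by simp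
  then have "AE x in lborel. u0 x = 0" using init
    by eventually_elim (simp add: v_def)
  with nz show False by simp
qed

theorem corollary2p2:
  fixes u0 :: "real \<Rightarrow> real" and u :: "real \<Rightarrow> real \<Rightarrow> real"
    and T :: ereal and \<mu> s :: real
  assumes "Hk 4 u0"
    and "\<not> (AE x in lborel. u0 x = 0)"
    and "T > 0"
    and "Bsp T u" and "DP_sol T u" and "AE x in lborel. u 0 x = u0 x"
    and "\<forall>T' v. T < T' \<and> Bsp T' v \<and> DP_sol T' v \<and> (AE x in lborel. v 0 x = u0 x) \<longrightarrow> False"
    and "s = 1 \<or> s = -1"
  shows "generic_DP_sol T \<mu> s u"
proof -
  note B = assms(4)
  have m: "C1_on (Udom T) (mDP u)" by (rule C1_mDP[OF B])
  have F: "C1_on (Udom T) (FDP u)" by (rule C1_FDP[OF B])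
  have e11: "f11 u = mDP u" by (rule ext) (simp add: f11_def)
  have e12: "f12 u = FDP u" by (rule ext) (simp add: f12_def)
  have e21: "f21 \<mu> s u = (\<lambda>p. \<mu> * mDP u p + s * 2 * sqrt (1 + \<mu>\<^sup>2))" by (rule ext) (simp add: f21_def)
  have e22: "f22 \<mu> s u = (\<lambda>p. \<mu> * FDP u p + 0)" by (rule ext) (simp add: f22_def)
  have e31: "f31 \<mu> s u = (\<lambda>p. (s * sqrt (1 + \<mu>\<^sup>2)) * mDP u p + 2 * \<mu>)" by (rule ext) (simp add: f31_def)
  have e32: "f32 \<mu> s u = (\<lambda>p. (s * sqrt (1 + \<mu>\<^sup>2)) * FDP u p + 0)" by (rule ext) (simp add: f32_def)
  obtain p0 where p0: "p0 \<in> Udom T" "FDP u p0 \<noteq> 0"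
    using nontrivial_FDP[OF B assms(3) assms(2) assms(6)] by blast
  have "open (Udom T \<inter> FDP u -` (- {0}))"
    by (rule continuous_open_preimage[OF FDP_cont[OF B] Udom_open]) (simp add: open_Compl)
  moreover have "p0 \<in> Udom T \<inter> FDP u -` (- {0})" using p0 by simp
  ultimately obtain r where r: "0 < r" "ball p0 r \<subseteq> Udom T \<inter> FDP u -` (- {0})"
    by (meson openE)
  have snz: "s \<noteq> 0" using assms(8) by auto
  have sq: "0 < sqrt (1 + \<mu>\<^sup>2)" by (simp add: add_pos_nonneg)
  have om: "\<exists>\<Omega>. open \<Omega> \<and> \<Omega> \<noteq> {} \<and> simply_connected \<Omega> \<and> \<Omega> \<subseteq> Udom T \<and>
        (\<forall>p\<in>\<Omega>. f11 u p * f22 \<mu> s u p - f12 u p * f21 \<mu> s u p \<noteq> 0)"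
  proof (intro exI[of _ "ball p0 r"] conjI ballI)
    show "open (ball p0 r)" by simp
    show "ball p0 r \<noteq> {}" using r(1) by simp
    show "simply_connected (ball p0 r)" by (rule convex_imp_simply_connected) simp
    show "ball p0 r \<subseteq> Udom T" using r(2) by blast
    fix p assume p: "p \<in> ball p0 r"
    then have Fp: "FDP u p \<noteq> 0" using r(2) by blast
    have "f11 u p * f22 \<mu> s u p - f12 u p * f21 \<mu> s u p = - (s * 2 * sqrt (1 + \<mu>\<^sup>2) * FDP u p)"
      by (simp add: f11_def f12_def f21_def f22_def algebra_simps)
    then show "f11 u p * f22 \<mu> s u p - f12 u p * f21 \<mu> s u p \<noteq> 0"
      using snz sq Fp by simp
  qed
  have c21: "C1_on (Udom T) (f21 \<mu> s u)" unfolding e21 by (rule C1_affine[OF m])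
  have c22: "C1_on (Udom T) (f22 \<mu> s u)" unfolding e22 by (rule C1_affine[OF F])
  have c31: "C1_on (Udom T) (f31 \<mu> s u)" unfolding e31 by (rule C1_affine[OF m])
  have c32: "C1_on (Udom T) (f32 \<mu> s u)" unfolding e32 by (rule C1_affine[OF F])
  have c11: "C1_on (Udom T) (f11 u)" unfolding e11 by (rule m)
  have c12: "C1_on (Udom T) (f12 u)" unfolding e12 by (rule F)
  show ?thesis
    unfolding generic_DP_sol_def using B assms(5) c11 c12 c21 c22 c31 c32 om by blast
qed


end
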